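(* Let $X_0=0$ and $X_n=\sum_{j=1}^{X_{n-1}}\xi_{n,j}+\varepsilon_n$ for $n\ge1$, where $\{\xi_{n,j},\varepsilon_n\}$ are independent nonnegative integer-valued random variables with $\xi_{n,j}$, $j\in\mathbb N$, identically distributed for each $n$. Let $G_n(x)=\mathbb E x^{\xi_{n,1}}$, $H_n(x)=\mathbb E x^{\varepsilon_n}$, $\rho_n=G_n'(1)$, $G_n''(1)<\infty$, and $m_{n,k}=H_n^{(k)}(1)$ (the $k$-th factorial moment of $\varepsilon_n$, assumed finite for $k\le J$). Let $J\ge 2$ be an integer and assume (i) $\rho_n<1$, $\lim_{n}\rho_n=1$, $\sum_{n=1}^\infty(1-\rho_n)=\infty$, and $\lim_n G_n''(1)/(1-\rho_n)=0$; (ii) $\lim_{n\to\infty}\frac{m_{n,j}}{j(1-\rho_n)}=\lambda_j$ for $j=1,\dots,J$, with $\lambda_J=0$. Then $X_n$ converges in distribution to the compound Poisson distribution $\mathrm{CP}(\mu)$, where $\mu$ is the finite measure on $\{1,\dots,J-1\}$ given by $$\mu\{j\}=\frac{1}{j!}\sum_{i=0}^{J-j-1}\frac{(-1)^i}{i!}\lambda_{j+i},\qquad j=1,\dots,J-1.$$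
   Context: For a finite measure $\mu$ on $\{1,2,\dots\}$, the compound Poisson distribution $\mathrm{CP}(\mu)$ is the distribution on $\{0,1,2,\dots\}$ with generating function $x\mapsto\exp\{\sum_{j\ge1}\mu\{j\}(x^j-1)\}$, $x\in[0,1]$. *)

theory Defs
  imports "HOL-Probability.Probability"
begin

text \<open>k-th factorial moment E[Y(Y-1)...(Y-k+1)] of a nat-valued distribution
  (equals the k-th derivative of the generating function at 1).\<close>
definition fmom :: "nat pmf \<Rightarrow> nat \<Rightarrow> real" where
  "fmom p k = measure_pmf.expectation p (\<lambda>i. \<Prod>l<k. real i - real l)"

definition fmom_finite :: "nat pmf \<Rightarrow> nat \<Rightarrow> bool" where
  "fmom_finite p k \<longleftrightarrow> integrable (measure_pmf p) (\<lambda>i. \<Prod>l<k. real i - real l)"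

primrec iid_sum :: "nat pmf \<Rightarrow> nat \<Rightarrow> nat pmf" where
  "iid_sum p 0 = return_pmf 0"
| "iid_sum p (Suc k) = bind_pmf (iid_sum p k) (\<lambda>s. map_pmf (\<lambda>x. s + x) p)"

primrec X_law :: "(nat \<Rightarrow> nat pmf) \<Rightarrow> (nat \<Rightarrow> nat pmf) \<Rightarrow> nat \<Rightarrow> nat pmf" where
  "X_law xi eps 0 = return_pmf 0"
| "X_law xi eps (Suc n) =
     bind_pmf (X_law xi eps n) (\<lambda>k. bind_pmf (iid_sum (xi (Suc n)) k)
        (\<lambda>s. map_pmf (\<lambda>e. s + e) (eps (Suc n))))"

text \<open>q is the compound Poisson distribution CP(mu), mu supported on {1..N}:
  its generating function is exp(sum_j mu{j}(x^j - 1)) on [0,1].\<close>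
definition is_CP :: "nat pmf \<Rightarrow> (nat \<Rightarrow> real) \<Rightarrow> nat \<Rightarrow> bool" where
  "is_CP q \<mu> N \<longleftrightarrow> (\<forall>x\<in>{0..1::real}.
      (\<Sum>k. pmf q k * x ^ k) = exp (\<Sum>j=1..N. \<mu> j * (x ^ j - 1)))"

end

theory Submission
  imports Defs
begin

definition pgf :: "nat pmf \<Rightarrow> real \<Rightarrow> real" where
  "pgf p x = measure_pmf.expectation p (\<lambda>k. x ^ k)"

lemma integrable_bdd_pmf:
  fixes f :: "'a \<Rightarrow> real"
  assumes "\<And>k. \<bar>f k\<bar> \<le> B"
  shows "integrable (measure_pmf p) f"
  by (rule measure_pmf.integrable_const_bound[where B=B]) (auto simp: assms)

lemma integrable_pow_pmf:
  fixes x :: real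
  assumes "0 \<le> x" "x \<le> 1"
  shows "integrable (measure_pmf p) (\<lambda>k. x ^ k)"
  by (rule measure_pmf.integrable_const_bound[where B=1]) (use assms in \<open>auto simp: power_le_one\<close>)

lemma pgf_nonneg: "0 \<le> x \<Longrightarrow> 0 \<le> pgf p x"
  unfolding pgf_def by (rule integral_nonneg_AE) auto

lemma pgf_le1: assumes "0 \<le> x" "x \<le> 1" shows "pgf p x \<le> 1"
proof -
  have "pgf p x \<le> measure_pmf.expectation p (\<lambda>k. 1::real)"
    unfolding pgf_def
    by (rule integral_mono) (use assms in \<open>auto intro!: integrable_pow_pmf simp: power_le_one\<close>)
  then show ?thesis by simp
qed

lemma integral_bind_pmf_real:
  fixes f :: "'b \<Rightarrow> real"
  assumes nn: "\<And>y. 0 \<le> f y" and bd: "\<And>y. f y \<le> B"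
  shows "measure_pmf.expectation (bind_pmf M N) f =
         measure_pmf.expectation M (\<lambda>a. measure_pmf.expectation (N a) f)"
proof -
  have B: "0 \<le> B" using nn bd order_trans by blast
  have i1: "integrable (measure_pmf q) f" for q
    by (rule integrable_bdd_pmf[where B=B]) (use nn bd in auto)
  have i2: "integrable (measure_pmf M) (\<lambda>a. measure_pmf.expectation (N a) f)"
  proof (rule integrable_bdd_pmf[where B=B])
    fix a
    have "measure_pmf.expectation (N a) f \<le> measure_pmf.expectation (N a) (\<lambda>_. B)"
      by (rule integral_mono) (use i1 bd in auto)
    moreover have "0 \<le> measure_pmf.expectation (N a) f"
      by (rule integral_nonneg_AE) (use nn in auto)
    ultimately show "\<bar>measure_pmf.expectation (N a) f\<bar> \<le> B" by simp
  qed
  have "ennreal (measure_pmf.expectation (bind_pmf M N) f) = (\<integral>\<^sup>+x. f x \<partial>bind_pmf M N)"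
    by (rule nn_integral_eq_integral[symmetric]) (use i1 nn in auto)
  also have "\<dots> = (\<integral>\<^sup>+a. \<integral>\<^sup>+y. f y \<partial>N a \<partial>M)" by simp
  also have "\<dots> = (\<integral>\<^sup>+a. ennreal (measure_pmf.expectation (N a) f) \<partial>M)"
    by (rule nn_integral_cong, rule nn_integral_eq_integral) (use i1 nn in auto)
  also have "\<dots> = ennreal (measure_pmf.expectation M (\<lambda>a. measure_pmf.expectation (N a) f))"
    by (rule nn_integral_eq_integral) (use i2 nn in \<open>auto intro!: integral_nonneg_AE\<close>)
  finally show ?thesis
    by (subst (asm) ennreal_inj) (auto intro!: integral_nonneg_AE nn)
qed

lemma pgf_bind:
  assumes "0 \<le> x" "x \<le> 1"
  shows "pgf (bind_pmf M N) x = measure_pmf.expectation M (\<lambda>a. pgf (N a) x)"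
  unfolding pgf_def
  by (rule integral_bind_pmf_real[where B=1]) (use assms in \<open>auto simp: power_le_one\<close>)

lemma pgf_map_add: "pgf (map_pmf (\<lambda>e. s + e) p) x = x ^ s * pgf p x"
  unfolding pgf_def by (simp add: power_add)

lemma pgf_return[simp]: "pgf (return_pmf k) x = x ^ k"
  unfolding pgf_def by simp

lemma pgf_iid:
  assumes "0 \<le> x" "x \<le> 1"
  shows "pgf (iid_sum p k) x = pgf p x ^ k"
proof (induction k)
  case 0 then show ?case by simp
next
  case (Suc k)
  have "pgf (iid_sum p (Suc k)) x = measure_pmf.expectation (iid_sum p k) (\<lambda>s. x ^ s * pgf p x)"
    by (simp add: pgf_bind[OF assms] pgf_map_add)
  also have "\<dots> = pgf (iid_sum p k) x * pgf p x"
    unfolding pgf_def by simp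
  finally show ?case using Suc by simp
qed

lemma pgf_X_Suc:
  assumes "0 \<le> x" "x \<le> 1"
  shows "pgf (X_law xi eps (Suc n)) x =
     pgf (X_law xi eps n) (pgf (xi (Suc n)) x) * pgf (eps (Suc n)) x"
proof -
  have "pgf (X_law xi eps (Suc n)) x = measure_pmf.expectation (X_law xi eps n)
      (\<lambda>k. measure_pmf.expectation (iid_sum (xi (Suc n)) k) (\<lambda>s. x ^ s * pgf (eps (Suc n)) x))"
    by (simp add: pgf_bind[OF assms] pgf_map_add)
  also have "\<dots> = measure_pmf.expectation (X_law xi eps n)
      (\<lambda>k. pgf (xi (Suc n)) x ^ k * pgf (eps (Suc n)) x)"
  proof (rule Bochner_Integration.integral_cong[OF refl])
    fix k
    have "measure_pmf.expectation (iid_sum (xi (Suc n)) k) (\<lambda>s. x ^ s * pgf (eps (Suc n)) x)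
       = pgf (iid_sum (xi (Suc n)) k) x * pgf (eps (Suc n)) x"
      unfolding pgf_def by simp
    then show "measure_pmf.expectation (iid_sum (xi (Suc n)) k) (\<lambda>s. x ^ s * pgf (eps (Suc n)) x)
       = pgf (xi (Suc n)) x ^ k * pgf (eps (Suc n)) x"
      by (simp add: pgf_iid[OF assms])
  qed
  also have "\<dots> = pgf (X_law xi eps n) (pgf (xi (Suc n)) x) * pgf (eps (Suc n)) x"
    unfolding pgf_def by simp
  finally show ?thesis .
qed

definition R :: "nat \<Rightarrow> nat \<Rightarrow> real \<Rightarrow> real" where
  "R J Y t = (1 - t) ^ Y - (\<Sum>j<J. real (Y choose j) * (- t) ^ j)"

lemma R_Suc_Suc: "R (Suc J) (Suc Y) t = R (Suc J) Y t - t * R J Y t"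
proof -
  have "(\<Sum>j<Suc J. real (Suc Y choose j) * (- t) ^ j)
      = (\<Sum>j<Suc J. real (Y choose j) * (- t) ^ j) + (\<Sum>j<J. real (Y choose j) * (- t) ^ Suc j)"
  proof -
    have "(\<Sum>j<Suc J. real (Suc Y choose j) * (- t) ^ j)
        = real (Suc Y choose 0) + (\<Sum>j<J. real (Suc Y choose Suc j) * (- t) ^ Suc j)"
      by (subst sum.lessThan_Suc_shift) simp
    also have "\<dots> = 1 + (\<Sum>j<J. real (Y choose Suc j) * (- t) ^ Suc j)
                      + (\<Sum>j<J. real (Y choose j) * (- t) ^ Suc j)"
      by (simp only: binomial_Suc_Suc of_nat_add distrib_right sum.distrib add_ac binomial_0_Suc) simp
    also have "1 + (\<Sum>j<J. real (Y choose Suc j) * (- t) ^ Suc j) = (\<Sum>j<Suc J. real (Y choose j) * (- t) ^ j)"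
      by (subst sum.lessThan_Suc_shift) simp
    finally show ?thesis .
  qed
  moreover have "(\<Sum>j<J. real (Y choose j) * (- t) ^ Suc j) = - t * (\<Sum>j<J. real (Y choose j) * (- t) ^ j)"
    by (simp add: sum_distrib_left algebra_simps)
  ultimately show ?thesis unfolding R_def
    by (simp add: algebra_simps)
qed

lemma R_bound:
  assumes "0 \<le> t" "t \<le> 1"
  shows "0 \<le> (-1) ^ J * R J Y t \<and> (-1) ^ J * R J Y t \<le> real (Y choose J) * t ^ J"
proof (induction Y arbitrary: J)
  case 0
  have "(\<Sum>j<J. real (0 choose j) * (- t) ^ j) = (if J = 0 then 0 else 1)"
    by (cases J) (simp_all only: sum.lessThan_Suc_shift, auto)
  then show ?case by (cases J) (simp_all add: R_def)
next
  case (Suc Y)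
  show ?case
  proof (cases J)
    case 0
    have "(1 - t) ^ Suc Y \<le> 1" using assms by (intro power_le_one) auto
    then show ?thesis using assms 0 by (simp add: R_def)
  next
    case (Suc J')
    have a: "0 \<le> (-1) ^ J * R J Y t" "(-1) ^ J * R J Y t \<le> real (Y choose J) * t ^ J"
      using Suc.IH[of J] by auto
    have b: "0 \<le> (-1) ^ J' * R J' Y t" "(-1) ^ J' * R J' Y t \<le> real (Y choose J') * t ^ J'"
      using Suc.IH[of J'] by auto
    have eq: "(-1) ^ J * R J (Suc Y) t = (-1) ^ J * R J Y t + t * ((-1) ^ J' * R J' Y t)"
      using Suc by (simp add: R_Suc_Suc algebra_simps)
    have "t * ((-1) ^ J' * R J' Y t) \<le> t * (real (Y choose J') * t ^ J')"
      using b assms by (intro mult_left_mono) auto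
    then have "(-1) ^ J * R J (Suc Y) t \<le> real (Y choose J) * t ^ J + real (Y choose J') * t ^ J"
      using eq a Suc by (simp add: algebra_simps)
    also have "\<dots> = real (Suc Y choose J) * t ^ J" using Suc by (simp add: algebra_simps)
    finally show ?thesis using eq a b assms by simp
  qed
qed

lemma prod_choose: "(\<Prod>l<k. real i - real l) = fact k * real (i choose k)"
  by (simp add: binomial_gbinomial gbinomial_prod_rev atLeast0LessThan)

lemma fmom_choose: "fmom p k = fact k * measure_pmf.expectation p (\<lambda>i. real (i choose k))"
  unfolding fmom_def prod_choose by simp

lemma fmom_finite_choose: "fmom_finite p k \<longleftrightarrow> integrable (measure_pmf p) (\<lambda>i. real (i choose k))"
  unfolding fmom_finite_def prod_choose
  by (subst integrable_mult_left_iff) auto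

lemma fmom_nonneg: "0 \<le> fmom p k"
  unfolding fmom_choose by (auto intro!: integral_nonneg_AE)

lemma fmom_0[simp]: "fmom p 0 = 1" unfolding fmom_def by simp

lemma E_choose: "measure_pmf.expectation p (\<lambda>i. real (i choose k)) = fmom p k / fact k"
  unfolding fmom_choose by simp

lemma pgf_expand:
  fixes p :: "nat pmf"
  assumes fin: "\<forall>k\<in>{1..J}. fmom_finite p k" and t: "0 \<le> t" "t \<le> 1"
  defines "E \<equiv> pgf p (1 - t) - (\<Sum>j<J. fmom p j / fact j * (- t) ^ j)"
  shows "0 \<le> (-1) ^ J * E \<and> (-1) ^ J * E \<le> fmom p J / fact J * t ^ J"
proof -
  have ic: "integrable (measure_pmf p) (\<lambda>i. real (i choose k))" if "k \<le> J" for k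
  proof (cases k)
    case 0 then show ?thesis by simp
  next
    case (Suc k') then show ?thesis using fin that fmom_finite_choose by auto
  qed
  have ip: "integrable (measure_pmf p) (\<lambda>i. (1 - t) ^ i)"
    by (rule integrable_pow_pmf) (use t in auto)
  have isum: "integrable (measure_pmf p) (\<lambda>i. \<Sum>j<J. real (i choose j) * (- t) ^ j)"
    using ic by (intro Bochner_Integration.integrable_sum integrable_mult_left) auto
  have E: "E = measure_pmf.expectation p (\<lambda>i. R J i t)"
  proof -
    have "measure_pmf.expectation p (\<lambda>i. R J i t) = pgf p (1 - t) -
       measure_pmf.expectation p (\<lambda>i. \<Sum>j<J. real (i choose j) * (- t) ^ j)"
      unfolding R_def pgf_def using ip isum by (subst Bochner_Integration.integral_diff) auto
    also have "measure_pmf.expectation p (\<lambda>i. \<Sum>j<J. real (i choose j) * (- t) ^ j)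
        = (\<Sum>j<J. fmom p j / fact j * (- t) ^ j)"
      using ic by (subst Bochner_Integration.integral_sum) (auto simp: E_choose)
    finally show ?thesis unfolding E_def by simp
  qed
  have iR: "integrable (measure_pmf p) (\<lambda>i. R J i t)"
    unfolding R_def using ip isum by auto
  have "0 \<le> measure_pmf.expectation p (\<lambda>i. (-1) ^ J * R J i t)"
    using R_bound[OF t] by (intro integral_nonneg_AE) auto
  moreover have "measure_pmf.expectation p (\<lambda>i. (-1) ^ J * R J i t)
      \<le> measure_pmf.expectation p (\<lambda>i. real (i choose J) * t ^ J)"
    using R_bound[OF t] iR ic by (intro integral_mono) auto
  ultimately show ?thesis unfolding E by (simp add: E_choose)
qed

lemma pgf_lower:
  fixes p :: "nat pmf"
  assumes fin: "fmom_finite p 1" and t: "0 \<le> t" "t \<le> 1"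
  shows "1 - pgf p (1 - t) \<le> fmom p 1 * t" "pgf p (1 - t) \<le> 1"
proof -
  show "1 - pgf p (1 - t) \<le> fmom p 1 * t"
    using pgf_expand[of 1 p t] assms by simp
  show "pgf p (1 - t) \<le> 1" using pgf_le1 t by simp
qed

lemma pgf_upper2:
  fixes p :: "nat pmf"
  assumes fin: "fmom_finite p 1" "fmom_finite p 2" and t: "0 \<le> t" "t \<le> 1"
  shows "pgf p (1 - t) \<le> 1 - fmom p 1 * t + fmom p 2 / 2 * t ^ 2"
    "1 - fmom p 1 * t \<le> pgf p (1 - t)"
proof -
  have f: "\<forall>k\<in>{1..2}. fmom_finite p k" using fin by (auto simp: atLeastAtMost_iff le_Suc_eq numeral_2_eq_2)
  have "(\<Sum>j<2. fmom p j / fact j * (- t) ^ j) = 1 - fmom p 1 * t"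
    by (simp add: numeral_2_eq_2)
  then show "pgf p (1 - t) \<le> 1 - fmom p 1 * t + fmom p 2 / 2 * t ^ 2"
    "1 - fmom p 1 * t \<le> pgf p (1 - t)"
    using pgf_expand[OF f t] by auto
qed

lemma toeplitz_generic:
  fixes w :: "nat \<Rightarrow> nat \<Rightarrow> real" and c :: "nat \<Rightarrow> real"
  assumes w_nn: "\<And>n k. 0 \<le> w n k" and w_sum: "\<And>n. (\<Sum>k=1..n. w n k) \<le> 1"
    and w_lim: "\<And>k. (\<lambda>n. w n k) \<longlonglongrightarrow> 0" and c: "c \<longlonglongrightarrow> 0"
  shows "(\<lambda>n. \<Sum>k=1..n. w n k * c k) \<longlonglongrightarrow> 0"
proof (rule LIMSEQ_I)
  fix r :: real assume r: "0 < r"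
  obtain M where M: "\<And>k. k \<ge> M \<Longrightarrow> \<bar>c k\<bar> < r / 2"
    using LIMSEQ_D[OF c, of "r/2"] r by auto
  have fin: "(\<lambda>n. \<Sum>k\<in>{1..<M}. w n k * \<bar>c k\<bar>) \<longlonglongrightarrow> 0"
    using w_lim by (auto intro!: tendsto_null_sum tendsto_mult_left_zero)
  obtain N where N: "\<And>n. n \<ge> N \<Longrightarrow> \<bar>\<Sum>k\<in>{1..<M}. w n k * \<bar>c k\<bar>\<bar> < r / 2"
    using LIMSEQ_D[OF fin, of "r/2"] r by auto
  show "\<exists>no. \<forall>n\<ge>no. norm ((\<Sum>k = 1..n. w n k * c k) - 0) < r"
  proof (intro exI allI impI)
    fix n assume n: "N \<le> n"
    let ?A = "{1..n} \<inter> {..<M}" and ?B = "{1..n} - {..<M}"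
    have "\<bar>\<Sum>k=1..n. w n k * c k\<bar> \<le> (\<Sum>k=1..n. w n k * \<bar>c k\<bar>)"
      by (rule order_trans[OF sum_abs]) (simp add: abs_mult w_nn)
    also have "\<dots> = (\<Sum>k\<in>?A. w n k * \<bar>c k\<bar>) + (\<Sum>k\<in>?B. w n k * \<bar>c k\<bar>)"
      by (subst sum.Int_Diff[of _ _ "{..<M}"]) auto
    also have "(\<Sum>k\<in>?A. w n k * \<bar>c k\<bar>) \<le> (\<Sum>k\<in>{1..<M}. w n k * \<bar>c k\<bar>)"
      by (rule sum_mono2) (auto simp: w_nn)
    also have "(\<Sum>k\<in>?B. w n k * \<bar>c k\<bar>) \<le> (\<Sum>k\<in>?B. w n k * (r/2))"
      using M by (intro sum_mono mult_left_mono) (auto simp: w_nn less_imp_le)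
    also have "\<dots> \<le> (\<Sum>k=1..n. w n k) * (r/2)"
      using r by (subst sum_distrib_right[symmetric], intro mult_right_mono sum_mono2) (auto simp: w_nn)
    also have "\<dots> \<le> r / 2" using w_sum[of n] r by (simp add: mult_left_le_one_le)
    finally show "norm ((\<Sum>k = 1..n. w n k * c k) - 0) < r" using N[OF n] by simp
  qed
qed

locale wts =
  fixes \<rho> :: "nat \<Rightarrow> real"
  assumes rho_nn: "\<And>k. k \<ge> 1 \<Longrightarrow> 0 \<le> \<rho> k" and rho_le: "\<And>k. k \<ge> 1 \<Longrightarrow> \<rho> k \<le> 1"
    and rho_div: "filterlim (\<lambda>N. \<Sum>n=1..N. 1 - \<rho> n) at_top sequentially"
begin

definition PI :: "nat \<Rightarrow> nat \<Rightarrow> real" where "PI k n = (\<Prod>i\<in>{k<..n}. \<rho> i)"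

lemma PI_nn: "0 \<le> PI k n" unfolding PI_def by (intro prod_nonneg) (auto intro: rho_nn)
lemma PI_le1: "PI k n \<le> 1" unfolding PI_def by (intro prod_le_1) (auto intro: rho_nn rho_le)

lemma PI_Suc: "k \<le> n \<Longrightarrow> PI k (Suc n) = PI k n * \<rho> (Suc n)"
proof -
  assume "k \<le> n"
  then have "{k<..Suc n} = insert (Suc n) {k<..n}" by auto
  then show ?thesis by (simp add: PI_def mult.commute)
qed

lemma PI_self[simp]: "PI n n = 1" unfolding PI_def by simp

lemma PI_exp: "PI k n \<le> exp (- (\<Sum>i\<in>{k<..n}. 1 - \<rho> i))"
proof -
  have "PI k n \<le> (\<Prod>i\<in>{k<..n}. exp (\<rho> i - 1))"
    unfolding PI_def
  proof (intro prod_mono conjI)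
    fix i assume "i \<in> {k<..n}"
    then show "0 \<le> \<rho> i" by (auto intro: rho_nn)
    show "\<rho> i \<le> exp (\<rho> i - 1)" using exp_ge_add_one_self[of "\<rho> i - 1"] by simp
  qed
  also have "\<dots> = exp (- (\<Sum>i\<in>{k<..n}. 1 - \<rho> i))"
    by (simp add: exp_sum[symmetric] sum_negf[symmetric])
  finally show ?thesis .
qed

lemma PI_lim: "(\<lambda>n. PI k n) \<longlonglongrightarrow> 0"
proof -
  have eq: "(\<Sum>i\<in>{k<..n}. 1 - \<rho> i) = (\<Sum>i=1..n. 1 - \<rho> i) - (\<Sum>i=1..k. 1 - \<rho> i)" if "k \<le> n" for n
  proof -
    have "{1..n} = {1..k} \<union> {k<..n}" using that by auto
    then show ?thesis by (simp add: sum.union_disjoint ivl_disj_int)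
  qed
  have "filterlim (\<lambda>n. (\<Sum>i=1..n. 1 - \<rho> i) - (\<Sum>i=1..k. 1 - \<rho> i)) at_top sequentially"
    using filterlim_tendsto_add_at_top[OF tendsto_const[of "- (\<Sum>i=1..k. 1 - \<rho> i)"] rho_div]
    by (simp add: algebra_simps)
  then have "filterlim (\<lambda>n. (\<Sum>i\<in>{k<..n}. 1 - \<rho> i)) at_top sequentially"
    by (rule filterlim_cong[THEN iffD1, rotated -1]) (auto simp: eventually_sequentially eq intro: exI[of _ k])
  then have "((\<lambda>n. exp (- (\<Sum>i\<in>{k<..n}. 1 - \<rho> i))) \<longlonglongrightarrow> 0)"
    by (intro filterlim_compose[OF exp_at_bot] filterlim_uminus_at_top[THEN iffD1] ) 
  then show ?thesis
    by (rule tendsto_sandwich[rotated 2, OF tendsto_const]) (auto intro!: always_eventually PI_nn PI_exp)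
qed

lemma telescope: "(\<Sum>k=1..n. (1 - \<rho> k) * PI k n) = 1 - PI 0 n"
proof (induction n)
  case 0 then show ?case by simp
next
  case (Suc n)
  have "(\<Sum>k=1..Suc n. (1 - \<rho> k) * PI k (Suc n)) = (\<Sum>k=1..n. (1 - \<rho> k) * PI k n) * \<rho> (Suc n) + (1 - \<rho> (Suc n))"
    by (simp add: sum_distrib_right PI_Suc mult.assoc)
  also have "\<dots> = (1 - PI 0 n) * \<rho> (Suc n) + (1 - \<rho> (Suc n))" using Suc by simp
  also have "\<dots> = 1 - PI 0 (Suc n)" by (simp add: PI_Suc algebra_simps)
  finally show ?case .
qed

lemma weight_nn: "k \<ge> 1 \<Longrightarrow> 0 \<le> (1 - \<rho> k) * PI k n"
  using rho_le PI_nn by simp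

lemma weight_sum: "(\<Sum>k=1..n. (1 - \<rho> k) * PI k n) \<le> 1"
  using telescope PI_nn by simp

lemma toeplitz: "c \<longlonglongrightarrow> 0 \<Longrightarrow> (\<lambda>n. \<Sum>k=1..n. (1 - \<rho> k) * PI k n * c k) \<longlonglongrightarrow> 0"
proof -
  assume c: "c \<longlonglongrightarrow> 0"
  let ?w = "\<lambda>n k. if k \<ge> 1 then (1 - \<rho> k) * PI k n else 0"
  have "(\<lambda>n. \<Sum>k=1..n. ?w n k * c k) \<longlonglongrightarrow> 0"
  proof (rule toeplitz_generic[OF _ _ _ c])
    show "0 \<le> ?w n k" for n k using weight_nn by auto
    show "(\<Sum>k=1..n. ?w n k) \<le> 1" for n
      using weight_sum[of n] by (subst sum.cong[OF refl, of _ _ "\<lambda>k. (1 - \<rho> k) * PI k n"]) auto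
    show "(\<lambda>n. ?w n k) \<longlonglongrightarrow> 0" for k
      by (cases "k \<ge> 1") (auto intro!: tendsto_mult_right_zero PI_lim)
  qed
  moreover have "(\<Sum>k=1..n. ?w n k * c k) = (\<Sum>k=1..n. (1 - \<rho> k) * PI k n * c k)" for n
    by (rule sum.cong) auto
  ultimately show ?thesis by simp
qed

end

primrec Fc :: "(nat \<Rightarrow> real \<Rightarrow> real) \<Rightarrow> nat \<Rightarrow> nat \<Rightarrow> real \<Rightarrow> real" where
  "Fc G k 0 x = x"
| "Fc G k (Suc n) x = (if Suc n \<le> k then x else Fc G k n (G (Suc n) x))"

lemma Fc_le: "n \<le> k \<Longrightarrow> Fc G k n x = x"
  by (induction n arbitrary: x) auto

lemma Fc_Suc: "k \<le> n \<Longrightarrow> Fc G k (Suc n) x = Fc G k n (G (Suc n) x)"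
  by simp

lemma pgf_01: "0 \<le> x \<Longrightarrow> x \<le> 1 \<Longrightarrow> pgf p x \<in> {0..1}"
  by (simp add: pgf_nonneg pgf_le1)

lemma Fc_01: "x \<in> {0..1} \<Longrightarrow> Fc (\<lambda>n. pgf (xi n)) k n x \<in> {0..1}"
proof (induction n arbitrary: x)
  case 0 then show ?case by simp
next
  case (Suc n)
  have "pgf (xi (Suc n)) x \<in> {0..1}" using Suc.prems by (simp add: pgf_nonneg pgf_le1)
  then show ?case using Suc by simp
qed

lemma pgf_X_prod:
  assumes "x \<in> {0..1}"
  shows "pgf (X_law xi eps n) x = (\<Prod>k=1..n. pgf (eps k) (Fc (\<lambda>n. pgf (xi n)) k n x))"
  using assms
proof (induction n arbitrary: x)
  case 0 then show ?case by simp
next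
  case (Suc n)
  let ?G = "\<lambda>n. pgf (xi n)"
  have y: "?G (Suc n) x \<in> {0..1}" using Suc.prems pgf_01 by auto
  have "pgf (X_law xi eps (Suc n)) x = pgf (X_law xi eps n) (?G (Suc n) x) * pgf (eps (Suc n)) x"
    using Suc.prems pgf_X_Suc by auto
  also have "\<dots> = (\<Prod>k=1..n. pgf (eps k) (Fc ?G k (Suc n) x)) * pgf (eps (Suc n)) (Fc ?G (Suc n) (Suc n) x)"
    using Suc.IH[OF y] by (simp add: Fc_le)
  also have "\<dots> = (\<Prod>k=1..Suc n. pgf (eps k) (Fc ?G k (Suc n) x))"
    by simp
  finally show ?case .
qed

locale main =
  fixes xi eps :: "nat \<Rightarrow> nat pmf" and J :: nat and lam :: "nat \<Rightarrow> real"
  assumes J: "J \<ge> 2"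
    and xi_fin: "\<forall>n\<ge>1. fmom_finite (xi n) 1 \<and> fmom_finite (xi n) 2"
    and eps_fin: "\<forall>n\<ge>1. \<forall>k\<in>{1..J}. fmom_finite (eps n) k"
    and rho_lt: "\<forall>n\<ge>1. fmom (xi n) 1 < 1"
    and rho_lim: "(\<lambda>n. fmom (xi n) 1) \<longlonglongrightarrow> 1"
    and rho_div': "filterlim (\<lambda>N. \<Sum>n=1..N. 1 - fmom (xi n) 1) at_top sequentially"
    and G2_lim: "(\<lambda>n. fmom (xi n) 2 / (1 - fmom (xi n) 1)) \<longlonglongrightarrow> 0"
    and lam_lim: "\<forall>j\<in>{1..J}. (\<lambda>n. fmom (eps n) j / (real j * (1 - fmom (xi n) 1)))
                      \<longlonglongrightarrow> lam j"
    and lam_J: "lam J = 0"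
begin

abbreviation "\<rho> n \<equiv> fmom (xi n) 1"
abbreviation "g n \<equiv> fmom (xi n) 2"
abbreviation "G n \<equiv> pgf (xi n)"
abbreviation "H n \<equiv> pgf (eps n)"
abbreviation "m k j \<equiv> fmom (eps k) j"

sublocale wts "\<lambda>n. fmom (xi n) 1"
  by unfold_locales (use rho_lt rho_div' fmom_nonneg in \<open>auto intro: less_imp_le\<close>)

definition t :: "real \<Rightarrow> nat \<Rightarrow> nat \<Rightarrow> real" where "t x k n = 1 - Fc G k n x"

lemma t_01: "x \<in> {0..1} \<Longrightarrow> 0 \<le> t x k n \<and> t x k n \<le> 1"
  using Fc_01[of x xi k n] by (auto simp: t_def)

lemma PI_le: "n \<le> k \<Longrightarrow> PI k n = 1" unfolding PI_def by simp

lemma t_upper: "x \<in> {0..1} \<Longrightarrow> t x k n \<le> PI k n * (1 - x)"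
proof (induction n arbitrary: x)
  case 0
  have "PI k 0 = 1" by (rule PI_le) simp
  then show ?case by (simp add: t_def)
next
  case (Suc n)
  show ?case
  proof (cases "Suc n \<le> k")
    case True
    have "PI k (Suc n) = 1" using True by (rule PI_le)
    then show ?thesis using True by (simp add: t_def)
  next
    case False
    then have kn: "k \<le> n" by simp
    have y: "G (Suc n) x \<in> {0..1}" using Suc.prems pgf_01 by auto
    have "t x k (Suc n) = t (G (Suc n) x) k n" using kn by (simp add: t_def)
    also have "\<dots> \<le> PI k n * (1 - G (Suc n) x)" using Suc.IH[OF y] .
    also have "1 - G (Suc n) x \<le> \<rho> (Suc n) * (1 - x)"
      using pgf_lower(1)[of "xi (Suc n)" "1 - x"] xi_fin Suc.prems by auto
    then have "PI k n * (1 - G (Suc n) x) \<le> PI k n * (\<rho> (Suc n) * (1 - x))"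
      using PI_nn by (intro mult_left_mono) auto
    also have "\<dots> = PI k (Suc n) * (1 - x)" using PI_Suc[OF kn] by simp
    finally show ?thesis .
  qed
qed

lemma t_le_PI: "x \<in> {0..1} \<Longrightarrow> t x k n \<le> PI k n"
proof -
  assume x: "x \<in> {0..1}"
  have "PI k n * (1 - x) \<le> PI k n" using PI_nn[of k n] x by (intro mult_left_le) auto
  then show ?thesis using t_upper[OF x, of k n] by linarith
qed

definition D :: "real \<Rightarrow> nat \<Rightarrow> nat \<Rightarrow> real" where "D x k n = PI k n * (1 - x) - t x k n"

lemma D_nn: "x \<in> {0..1} \<Longrightarrow> 0 \<le> D x k n"
  using t_upper unfolding D_def by auto

lemma D_upper: "x \<in> {0..1} \<Longrightarrow> D x k n \<le> (\<Sum>i\<in>{k<..n}. PI k (i - 1) * g i / 2 * (t x i n)^2)"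
proof (induction n arbitrary: x)
  case 0
  have "PI k 0 = 1" by (rule PI_le) simp
  then show ?case by (simp add: t_def D_def)
next
  case (Suc n)
  show ?case
  proof (cases "Suc n \<le> k")
    case True
    have "PI k (Suc n) = 1" using True by (rule PI_le)
    then show ?thesis using True by (simp add: t_def D_def)
  next
    case False
    then have kn: "k \<le> n" by simp
    have y: "G (Suc n) x \<in> {0..1}" using Suc.prems pgf_01 by auto
    have "D x k (Suc n) = PI k n * (\<rho> (Suc n) * (1 - x) - (1 - G (Suc n) x)) + D (G (Suc n) x) k n"
      using kn PI_Suc[OF kn] by (simp add: D_def t_def algebra_simps)
    also have "\<rho> (Suc n) * (1 - x) - (1 - G (Suc n) x) \<le> g (Suc n) / 2 * (1 - x)^2"
      using pgf_upper2(1)[of "xi (Suc n)" "1 - x"] xi_fin Suc.prems by auto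
    then have "PI k n * (\<rho> (Suc n) * (1 - x) - (1 - G (Suc n) x)) \<le> PI k n * (g (Suc n) / 2 * (1 - x)^2)"
      using PI_nn by (intro mult_left_mono) auto
    also have "D (G (Suc n) x) k n \<le> (\<Sum>i\<in>{k<..n}. PI k (i - 1) * g i / 2 * (t (G (Suc n) x) i n)^2)"
      using Suc.IH[OF y] .
    also have "\<dots> = (\<Sum>i\<in>{k<..n}. PI k (i - 1) * g i / 2 * (t x i (Suc n))^2)"
      by (rule sum.cong) (auto simp: t_def)
    also have "PI k n * (g (Suc n) / 2 * (1 - x)^2) + \<dots> = (\<Sum>i\<in>{k<..Suc n}. PI k (i - 1) * g i / 2 * (t x i (Suc n))^2)"
    proof -
      have "{k<..Suc n} = insert (Suc n) {k<..n}" using kn by auto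
      then show ?thesis by (simp add: t_def Fc_le)
    qed
    finally show ?thesis by simp
  qed
qed

lemma g_nn: "0 \<le> g i" by (rule fmom_nonneg)

lemma D_upper2: "x \<in> {0..1} \<Longrightarrow> D x k n \<le> (\<Sum>i\<in>{k<..n}. PI k (i - 1) * g i / 2 * PI i n)"
proof -
  assume x: "x \<in> {0..1}"
  have "(t x i n)^2 \<le> PI i n" for i
  proof -
    have "(t x i n)^2 \<le> t x i n" using t_01[OF x] by (simp add: power2_eq_square mult_left_le)
    then show ?thesis using t_le_PI[OF x, of i n] by linarith
  qed
  show ?thesis
  proof (intro order_trans[OF D_upper[OF x, of k n]] sum_mono)
    fix i
    assume "i \<in> {k<..n}"
    have "0 \<le> PI k (i - 1) * g i / 2" using PI_nn g_nn by simp
    then show "PI k (i - 1) * g i / 2 * (t x i n)\<^sup>2 \<le> PI k (i - 1) * g i / 2 * PI i n"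
      by (rule mult_left_mono[OF \<open>(t x i n)^2 \<le> PI i n\<close>])
  qed
qed

lemma sum_D_lim: "x \<in> {0..1} \<Longrightarrow> (\<lambda>n. \<Sum>k=1..n. (1 - \<rho> k) * D x k n) \<longlonglongrightarrow> 0"
proof -
  assume x: "x \<in> {0..1}"
  have bound: "(\<Sum>k=1..n. (1 - \<rho> k) * D x k n) \<le> (\<Sum>i=1..n. (1 - \<rho> i) * PI i n * (g i / (2 * (1 - \<rho> i))))"
    for n
  proof -
    have "(\<Sum>k=1..n. (1 - \<rho> k) * D x k n)
        \<le> (\<Sum>k=1..n. (1 - \<rho> k) * (\<Sum>i\<in>{k<..n}. PI k (i - 1) * g i / 2 * PI i n))"
      using D_upper2[OF x] rho_le by (intro sum_mono mult_left_mono) auto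
    also have "\<dots> = (\<Sum>k\<in>{1..n}. \<Sum>i\<in>{i\<in>{1..n}. k < i}. (1 - \<rho> k) * (PI k (i - 1) * g i / 2 * PI i n))"
    proof (rule sum.cong[OF refl])
      fix k assume "k \<in> {1..n}"
      then have "{k<..n} = {i\<in>{1..n}. k < i}" by auto
      then show "(1 - \<rho> k) * (\<Sum>i\<in>{k<..n}. PI k (i - 1) * g i / 2 * PI i n) =
          (\<Sum>i\<in>{i\<in>{1..n}. k < i}. (1 - \<rho> k) * (PI k (i - 1) * g i / 2 * PI i n))"
        by (simp add: sum_distrib_left)
    qed
    also have "\<dots> = (\<Sum>i\<in>{1..n}. \<Sum>k\<in>{k\<in>{1..n}. k < i}. (1 - \<rho> k) * (PI k (i - 1) * g i / 2 * PI i n))"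
      by (rule sum.swap_restrict) auto
    also have "\<dots> = (\<Sum>i\<in>{1..n}. (\<Sum>k=1..i-1. (1 - \<rho> k) * PI k (i - 1)) * (g i / 2 * PI i n))"
      by (intro sum.cong refl) (auto simp: sum_distrib_right intro!: sum.cong)
    also have "\<dots> \<le> (\<Sum>i\<in>{1..n}. 1 * (g i / 2 * PI i n))"
      using weight_sum PI_nn g_nn by (intro sum_mono mult_right_mono) auto
    also have "\<dots> = (\<Sum>i=1..n. (1 - \<rho> i) * PI i n * (g i / (2 * (1 - \<rho> i))))"
      using rho_lt by (intro sum.cong refl) (auto simp: field_simps)
    finally show ?thesis .
  qed
  have lim: "(\<lambda>n. \<Sum>i=1..n. (1 - \<rho> i) * PI i n * (g i / (2 * (1 - \<rho> i)))) \<longlonglongrightarrow> 0"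
    using G2_lim by (intro toeplitz) (auto dest: tendsto_divide[OF _ tendsto_const[of 2]] simp: field_simps)
  show ?thesis
  proof (rule Lim_null_comparison[OF _ lim])
    show "\<forall>\<^sub>F n in sequentially. norm (\<Sum>k=1..n. (1 - \<rho> k) * D x k n) \<le> (\<Sum>i=1..n. (1 - \<rho> i) * PI i n * (g i / (2 * (1 - \<rho> i))))"
    proof (intro always_eventually allI)
      fix n
      have "0 \<le> (\<Sum>k=1..n. (1 - \<rho> k) * D x k n)"
        using D_nn[OF x] rho_le by (intro sum_nonneg mult_nonneg_nonneg) auto
      then show "norm (\<Sum>k=1..n. (1 - \<rho> k) * D x k n) \<le> (\<Sum>i=1..n. (1 - \<rho> i) * PI i n * (g i / (2 * (1 - \<rho> i))))"
        using bound[of n] by simp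
    qed
  qed
qed

end

declare One_nat_def [simp del]

lemma pow_diff_le:
  fixes s t :: real
  assumes "0 \<le> t" "t \<le> s" "s \<le> 1"
  shows "s ^ j - t ^ j \<le> real j * (s - t)"
proof (induction j)
  case 0 then show ?case by simp
next
  case (Suc j)
  have "s ^ Suc j - t ^ Suc j = s * (s ^ j - t ^ j) + t ^ j * (s - t)" by (simp add: algebra_simps)
  also have "s * (s ^ j - t ^ j) \<le> 1 * (real j * (s - t))"
    using Suc assms by (intro mult_mono) (auto simp: power_mono)
  also have "t ^ j * (s - t) \<le> 1 * (s - t)"
    using assms by (intro mult_right_mono) (auto simp: power_le_one)
  finally show ?case by (simp add: algebra_simps)
qed

lemma exp_minus_approx:
  fixes u :: real assumes "0 \<le> u" "u \<le> 1"
  shows "\<bar>(1 - u) - exp (- u)\<bar> \<le> u ^ 2"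
proof -
  have a: "1 - u \<le> exp (- u)" using exp_ge_add_one_self[of "-u"] by simp
  have "exp u \<ge> 1 + u" using exp_ge_add_one_self[of u] by simp
  then have "exp (- u) \<le> 1 / (1 + u)" using assms by (simp add: exp_minus field_simps)
  also have "1 / (1 + u) \<le> 1 - u + u ^ 2"
    using assms by (simp add: field_simps power2_eq_square)
  finally show ?thesis using a by simp
qed

lemma prod_diff_le:
  fixes a b :: "nat \<Rightarrow> real"
  assumes "\<And>k. k \<in> A \<Longrightarrow> a k \<in> {0..1} \<and> b k \<in> {0..1}"
  shows "\<bar>(\<Prod>k\<in>A. a k) - (\<Prod>k\<in>A. b k)\<bar> \<le> (\<Sum>k\<in>A. \<bar>a k - b k\<bar>)"
  using assms
proof (induction A rule: infinite_finite_induct)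
  case (insert x F)
  have pa: "0 \<le> (\<Prod>k\<in>F. a k)" "(\<Prod>k\<in>F. a k) \<le> 1" using insert.prems
    by (auto intro!: prod_nonneg prod_le_1)
  have bx: "0 \<le> b x" "b x \<le> 1" using insert.prems by auto
  have "(\<Prod>k\<in>insert x F. a k) - (\<Prod>k\<in>insert x F. b k)
       = (a x - b x) * (\<Prod>k\<in>F. a k) + b x * ((\<Prod>k\<in>F. a k) - (\<Prod>k\<in>F. b k))"
    using insert by (simp add: algebra_simps)
  also have "\<bar>\<dots>\<bar> \<le> \<bar>a x - b x\<bar> * (\<Prod>k\<in>F. a k) + b x * \<bar>(\<Prod>k\<in>F. a k) - (\<Prod>k\<in>F. b k)\<bar>"
    using pa bx by (intro order_trans[OF abs_triangle_ineq]) (simp add: abs_mult)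
  also have "\<dots> \<le> \<bar>a x - b x\<bar> + \<bar>(\<Prod>k\<in>F. a k) - (\<Prod>k\<in>F. b k)\<bar>"
    using pa bx by (intro add_mono mult_left_le mult_left_le_one_le) auto
  also have "\<dots> \<le> \<bar>a x - b x\<bar> + (\<Sum>k\<in>F. \<bar>a k - b k\<bar>)"
    using insert by auto
  finally show ?case using insert by simp
qed auto

context main
begin

lemma toep_bound:
  assumes "\<And>n. \<bar>a n\<bar> \<le> (\<Sum>k=1..n. (1 - \<rho> k) * PI k n * c k)" and "c \<longlonglongrightarrow> 0"
  shows "a \<longlonglongrightarrow> 0"
  by (rule Lim_null_comparison[OF always_eventually toeplitz[OF assms(2)]]) (use assms(1) in auto)

lemma rho_lt1: "k \<ge> 1 \<Longrightarrow> \<rho> k < 1" using rho_lt by auto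

definition ell :: "nat \<Rightarrow> nat \<Rightarrow> real" where "ell j k = m k j / (real j * (1 - \<rho> k))"

lemma ell_lim: "j \<in> {1..J} \<Longrightarrow> (\<lambda>k. ell j k) \<longlonglongrightarrow> lam j"
  using lam_lim unfolding ell_def by auto

lemma m_eq: "j \<ge> 1 \<Longrightarrow> k \<ge> 1 \<Longrightarrow> m k j = real j * (1 - \<rho> k) * ell j k"
  using rho_lt1[of k] unfolding ell_def by auto

lemma ell_bdd: "j \<in> {1..J} \<Longrightarrow> \<exists>B. \<forall>k. \<bar>ell j k\<bar> \<le> B"
proof -
  assume "j \<in> {1..J}"
  then have "Bseq (ell j)" using ell_lim by (intro convergent_imp_Bseq) (auto simp: convergent_def)
  then show ?thesis by (auto simp: Bseq_def)
qed

lemma telescope_pow: "(\<Sum>k=1..n. (1 - \<rho> k ^ j) * PI k n ^ j) = 1 - PI 0 n ^ j"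
proof (induction n)
  case 0 then show ?case by simp
next
  case (Suc n)
  have "(\<Sum>k=1..Suc n. (1 - \<rho> k ^ j) * PI k (Suc n) ^ j)
      = (\<Sum>k=1..n. (1 - \<rho> k ^ j) * PI k n ^ j) * \<rho> (Suc n) ^ j + (1 - \<rho> (Suc n) ^ j)"
  proof -
    have "(\<Sum>k=1..n. (1 - \<rho> k ^ j) * PI k (Suc n) ^ j) = (\<Sum>k=1..n. (1 - \<rho> k ^ j) * PI k n ^ j) * \<rho> (Suc n) ^ j"
      by (simp add: sum_distrib_right PI_Suc power_mult_distrib mult.assoc)
    then show ?thesis by simp
  qed
  also have "\<dots> = (1 - PI 0 n ^ j) * \<rho> (Suc n) ^ j + (1 - \<rho> (Suc n) ^ j)" using Suc by simp
  also have "\<dots> = 1 - PI 0 (Suc n) ^ j" using PI_Suc[of 0 n] by (simp add: algebra_simps power_mult_distrib)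
  finally show ?case .
qed

lemma rho_nn': "k \<ge> 1 \<Longrightarrow> 0 \<le> \<rho> k" by (rule fmom_nonneg)

lemma weighted_pow_lim:
  assumes j: "j \<ge> 1"
  shows "(\<lambda>n. \<Sum>k=1..n. real j * (1 - \<rho> k) * PI k n ^ j) \<longlonglongrightarrow> 1"
proof -
  let ?c = "\<lambda>k. \<Sum>i<j. (1 - \<rho> k ^ i)"
  have c: "?c \<longlonglongrightarrow> 0"
    using rho_lim by (auto intro!: tendsto_null_sum tendsto_eq_intros)
  have eq: "real j * (1 - \<rho> k) - (1 - \<rho> k ^ j) = (1 - \<rho> k) * ?c k" for k
  proof -
    have "1 - \<rho> k ^ j = (1 - \<rho> k) * (\<Sum>i<j. \<rho> k ^ i)" by (simp add: one_diff_power_eq)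
    then show ?thesis by (simp add: sum_subtractf algebra_simps)
  qed
  have diff: "(\<lambda>n. (\<Sum>k=1..n. real j * (1 - \<rho> k) * PI k n ^ j) - (\<Sum>k=1..n. (1 - \<rho> k ^ j) * PI k n ^ j)) \<longlonglongrightarrow> 0"
  proof (rule toep_bound[OF _ c])
    fix n
    have "\<bar>(\<Sum>k=1..n. real j * (1 - \<rho> k) * PI k n ^ j) - (\<Sum>k=1..n. (1 - \<rho> k ^ j) * PI k n ^ j)\<bar>
        = \<bar>\<Sum>k=1..n. (1 - \<rho> k) * ?c k * PI k n ^ j\<bar>"
      by (simp add: sum_subtractf[symmetric] left_diff_distrib[symmetric] eq)
    also have "\<dots> \<le> (\<Sum>k=1..n. \<bar>(1 - \<rho> k) * ?c k * PI k n ^ j\<bar>)" by (rule sum_abs)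
    also have "\<dots> \<le> (\<Sum>k=1..n. (1 - \<rho> k) * PI k n * ?c k)"
    proof (rule sum_mono)
      fix k assume k: "k \<in> {1..n}"
      have r: "0 \<le> \<rho> k" "\<rho> k \<le> 1" using k rho_nn' rho_le by auto
      have c0: "0 \<le> ?c k" using r by (intro sum_nonneg) (auto simp: power_le_one)
      have "PI k n ^ j \<le> PI k n ^ 1" using j PI_nn PI_le1 by (intro power_decreasing) auto
      then have "PI k n ^ j \<le> PI k n" by simp
      moreover have "0 \<le> PI k n ^ j" using PI_nn by simp
      ultimately show "\<bar>(1 - \<rho> k) * ?c k * PI k n ^ j\<bar> \<le> (1 - \<rho> k) * PI k n * ?c k"
      proof -
        have nn: "0 \<le> (1 - \<rho> k) * ?c k" using r c0 by simp
        then have "\<bar>(1 - \<rho> k) * ?c k * PI k n ^ j\<bar> = (1 - \<rho> k) * ?c k * PI k n ^ j"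
          using PI_nn by simp
        also have "\<dots> \<le> (1 - \<rho> k) * ?c k * PI k n"
          by (rule mult_left_mono[OF \<open>PI k n ^ j \<le> PI k n\<close> nn])
        finally show ?thesis by (simp add: ac_simps)
      qed
    qed
    finally show "\<bar>(\<Sum>k=1..n. real j * (1 - \<rho> k) * PI k n ^ j) - (\<Sum>k=1..n. (1 - \<rho> k ^ j) * PI k n ^ j)\<bar>
        \<le> (\<Sum>k=1..n. (1 - \<rho> k) * PI k n * ?c k)" .
  qed
  have "(\<lambda>n. \<Sum>k=1..n. (1 - \<rho> k ^ j) * PI k n ^ j) \<longlonglongrightarrow> 1"
    unfolding telescope_pow using PI_lim[of 0] j by (auto intro!: tendsto_eq_intros)
  from tendsto_add[OF diff this] show ?thesis by simp
qed

end

declare One_nat_def [simp del]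

context main
begin

lemma m_nn: "0 \<le> m k j" by (rule fmom_nonneg)

lemma ell_abs: "j \<ge> 1 \<Longrightarrow> k \<ge> 1 \<Longrightarrow> m k j \<le> real j * (1 - \<rho> k) * \<bar>ell j k\<bar>"
  using m_eq[of j k] rho_lt1[of k] m_nn[of k j]
  by (metis abs_ge_self abs_of_nonneg mult_left_mono mult_nonneg_nonneg of_nat_0_le_iff diff_ge_0_iff_ge less_imp_le)

lemma sum_m_pow_lim:
  assumes j: "j \<in> {1..J}"
  shows "(\<lambda>n. \<Sum>k=1..n. m k j * PI k n ^ j) \<longlonglongrightarrow> lam j"
proof -
  have j1: "j \<ge> 1" using j by auto
  let ?c = "\<lambda>k. real j * \<bar>ell j k - lam j\<bar>"
  have c: "?c \<longlonglongrightarrow> 0"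
    using ell_lim[OF j] by (intro tendsto_mult_right_zero tendsto_rabs_zero LIM_zero)
  have diff: "(\<lambda>n. (\<Sum>k=1..n. m k j * PI k n ^ j) - lam j * (\<Sum>k=1..n. real j * (1 - \<rho> k) * PI k n ^ j)) \<longlonglongrightarrow> 0"
  proof (rule toep_bound[OF _ c])
    fix n
    have eq1: "(\<Sum>k=1..n. m k j * PI k n ^ j) - lam j * (\<Sum>k=1..n. real j * (1 - \<rho> k) * PI k n ^ j)
        = (\<Sum>k=1..n. m k j * PI k n ^ j - lam j * (real j * (1 - \<rho> k) * PI k n ^ j))"
      by (simp add: sum_distrib_left sum_subtractf)
    have eq2: "(\<Sum>k=1..n. m k j * PI k n ^ j - lam j * (real j * (1 - \<rho> k) * PI k n ^ j))
       = (\<Sum>k=1..n. real j * (1 - \<rho> k) * (ell j k - lam j) * PI k n ^ j)"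
    proof (rule sum.cong[OF refl])
      fix k assume "k \<in> {1..n}"
      then have meq: "m k j = real j * (1 - \<rho> k) * ell j k" by (intro m_eq j1) auto
      show "m k j * PI k n ^ j - lam j * (real j * (1 - \<rho> k) * PI k n ^ j)
          = real j * (1 - \<rho> k) * (ell j k - lam j) * PI k n ^ j"
        unfolding meq by (simp add: algebra_simps)
    qed
    have le: "\<bar>\<Sum>k=1..n. real j * (1 - \<rho> k) * (ell j k - lam j) * PI k n ^ j\<bar> \<le> (\<Sum>k=1..n. (1 - \<rho> k) * PI k n * ?c k)"
    proof (rule order_trans[OF sum_abs sum_mono])
      fix k assume k: "k \<in> {1..n}"
      have r: "0 \<le> 1 - \<rho> k" using k rho_le by auto
      have p: "PI k n ^ j \<le> PI k n ^ 1" using j1 PI_nn PI_le1 by (intro power_decreasing) auto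
      have "\<bar>real j * (1 - \<rho> k) * (ell j k - lam j) * PI k n ^ j\<bar>
          = ((1 - \<rho> k) * ?c k) * PI k n ^ j" using r PI_nn by (simp add: abs_mult)
      also have "\<dots> \<le> ((1 - \<rho> k) * ?c k) * PI k n"
        using p r by (intro mult_left_mono) auto
      finally show "\<bar>real j * (1 - \<rho> k) * (ell j k - lam j) * PI k n ^ j\<bar> \<le> (1 - \<rho> k) * PI k n * ?c k"
        by (simp add: ac_simps)
    qed
    show "\<bar>(\<Sum>k=1..n. m k j * PI k n ^ j) - lam j * (\<Sum>k=1..n. real j * (1 - \<rho> k) * PI k n ^ j)\<bar>
        \<le> (\<Sum>k=1..n. (1 - \<rho> k) * PI k n * ?c k)"
      unfolding eq1 eq2 by (rule le)
  qed
  have "(\<lambda>n. lam j * (\<Sum>k=1..n. real j * (1 - \<rho> k) * PI k n ^ j)) \<longlonglongrightarrow> lam j * 1"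
    using weighted_pow_lim[OF j1] by (rule tendsto_mult_left)
  from tendsto_add[OF diff this] show ?thesis by simp
qed

lemma S_lim:
  assumes x: "x \<in> {0..1}" and j: "j \<in> {1..J}"
  shows "(\<lambda>n. \<Sum>k=1..n. m k j * t x k n ^ j) \<longlonglongrightarrow> lam j * (1 - x) ^ j"
proof -
  have j1: "j \<ge> 1" using j by auto
  obtain B where B: "\<And>k. \<bar>ell j k\<bar> \<le> B" using ell_bdd[OF j] by auto
  have B0: "0 \<le> B" using B[of 0] by linarith
  have a: "(\<lambda>n. (1 - x) ^ j * (\<Sum>k=1..n. m k j * PI k n ^ j)) \<longlonglongrightarrow> (1 - x) ^ j * lam j"
    by (rule tendsto_mult_left[OF sum_m_pow_lim[OF j]])
  have eqa: "(1 - x) ^ j * (\<Sum>k=1..n. m k j * PI k n ^ j) = (\<Sum>k=1..n. m k j * (PI k n * (1 - x)) ^ j)" for n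
    by (simp add: sum_distrib_left power_mult_distrib ac_simps)
  have b: "(\<lambda>n. real j * real j * B * (\<Sum>k=1..n. (1 - \<rho> k) * D x k n)) \<longlonglongrightarrow> 0"
    using sum_D_lim[OF x] by (rule tendsto_mult_right_zero)
  have diff: "(\<lambda>n. (\<Sum>k=1..n. m k j * (PI k n * (1 - x)) ^ j) - (\<Sum>k=1..n. m k j * t x k n ^ j)) \<longlonglongrightarrow> 0"
  proof (rule Lim_null_comparison[OF always_eventually b], intro allI)
    fix n
    have "\<bar>(\<Sum>k=1..n. m k j * (PI k n * (1 - x)) ^ j) - (\<Sum>k=1..n. m k j * t x k n ^ j)\<bar>
        = \<bar>\<Sum>k=1..n. m k j * ((PI k n * (1 - x)) ^ j - t x k n ^ j)\<bar>"
      by (simp add: sum_subtractf[symmetric] right_diff_distrib)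
    also have "\<dots> \<le> (\<Sum>k=1..n. \<bar>m k j * ((PI k n * (1 - x)) ^ j - t x k n ^ j)\<bar>)" by (rule sum_abs)
    also have "\<dots> \<le> (\<Sum>k=1..n. real j * real j * B * ((1 - \<rho> k) * D x k n))"
    proof (rule sum_mono)
      fix k assume k: "k \<in> {1..n}"
      have t0: "0 \<le> t x k n" "t x k n \<le> PI k n * (1 - x)" using t_01[OF x] t_upper[OF x] by auto
      have s1: "PI k n * (1 - x) \<le> 1" using PI_le1[of k n] PI_nn[of k n] x
        by (simp add: mult_le_one)
      have pd: "0 \<le> (PI k n * (1 - x)) ^ j - t x k n ^ j" using t0 by (simp add: power_mono)
      have pd2: "(PI k n * (1 - x)) ^ j - t x k n ^ j \<le> real j * D x k n"
        unfolding D_def using pow_diff_le[OF t0(1) t0(2) s1] .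
      have mb: "m k j \<le> real j * (1 - \<rho> k) * B"
        using ell_abs[OF j1, of k] k B[of k] rho_le[of k]
        by (smt (verit) atLeastAtMost_iff mult_left_mono mult_nonneg_nonneg of_nat_0_le_iff)
      have "\<bar>m k j * ((PI k n * (1 - x)) ^ j - t x k n ^ j)\<bar> = m k j * ((PI k n * (1 - x)) ^ j - t x k n ^ j)"
        using pd m_nn by simp
      also have "\<dots> \<le> (real j * (1 - \<rho> k) * B) * (real j * D x k n)"
      proof -
        have "0 \<le> real j * (1 - \<rho> k) * B" using m_nn[of k j] mb by linarith
        then show ?thesis using pd pd2 mb m_nn by (intro mult_mono) auto
      qed
      finally show "\<bar>m k j * ((PI k n * (1 - x)) ^ j - t x k n ^ j)\<bar> \<le> real j * real j * B * ((1 - \<rho> k) * D x k n)"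
        by (simp add: ac_simps)
    qed
    also have "\<dots> = real j * real j * B * (\<Sum>k=1..n. (1 - \<rho> k) * D x k n)"
      by (simp add: sum_distrib_left)
    finally show "norm ((\<Sum>k=1..n. m k j * (PI k n * (1 - x)) ^ j) - (\<Sum>k=1..n. m k j * t x k n ^ j))
       \<le> real j * real j * B * (\<Sum>k=1..n. (1 - \<rho> k) * D x k n)" by simp
  qed
  have "(\<lambda>n. (\<Sum>k=1..n. m k j * (PI k n * (1 - x)) ^ j)) \<longlonglongrightarrow> (1 - x) ^ j * lam j"
    using a by (simp add: eqa)
  from tendsto_diff[OF this diff] show ?thesis by (simp add: mult.commute)
qed

end

declare One_nat_def [simp del]

context main
begin

definition L :: "real \<Rightarrow> real" where
  "L x = (\<Sum>j\<in>{1..<J}. (-1) ^ j / fact j * lam j * (1 - x) ^ j)"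

definition Er :: "real \<Rightarrow> nat \<Rightarrow> nat \<Rightarrow> real" where
  "Er x k n = H k (1 - t x k n) - (\<Sum>j<J. m k j / fact j * (- t x k n) ^ j)"

lemma Er_bound:
  assumes x: "x \<in> {0..1}" and k: "k \<ge> 1"
  shows "\<bar>Er x k n\<bar> \<le> m k J * PI k n"
proof -
  have fin: "\<forall>i\<in>{1..J}. fmom_finite (eps k) i" using eps_fin k by auto
  have tt: "0 \<le> t x k n" "t x k n \<le> 1" using t_01[OF x] by auto
  from pgf_expand[OF fin tt] have b0: "0 \<le> (-1) ^ J * Er x k n" "(-1) ^ J * Er x k n \<le> m k J / fact J * t x k n ^ J"
    unfolding Er_def by auto
  have "\<bar>Er x k n\<bar> = \<bar>(-1) ^ J * Er x k n\<bar>" by (simp add: abs_mult)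
  then have b: "\<bar>Er x k n\<bar> \<le> m k J / fact J * t x k n ^ J" using b0 by simp
  have "t x k n ^ J \<le> t x k n ^ 1" using J tt by (intro power_decreasing) auto
  also have "\<dots> \<le> PI k n" using t_le_PI[OF x] by simp
  finally have tp: "t x k n ^ J \<le> PI k n" .
  have "m k J / fact J * t x k n ^ J \<le> m k J * t x k n ^ J"
    using m_nn[of k J] tt by (intro mult_right_mono) (auto simp: divide_le_eq fact_ge_1 mult_le_cancel_left1 )
  also have "\<dots> \<le> m k J * PI k n" using tp m_nn by (intro mult_left_mono) auto
  finally show ?thesis using b by linarith
qed


lemma Er_lim:
  assumes x: "x \<in> {0..1}"
  shows "(\<lambda>n. \<Sum>k=1..n. Er x k n) \<longlonglongrightarrow> 0"
proof -
  let ?c = "\<lambda>k. real J * \<bar>ell J k\<bar>"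
  have JJ: "J \<in> {1..J}" using J by auto
  have c: "?c \<longlonglongrightarrow> 0"
    using ell_lim[OF JJ] lam_J by (intro tendsto_mult_right_zero tendsto_rabs_zero) auto
  show ?thesis
  proof (rule toep_bound[OF _ c])
    fix n
    have "(\<Sum>k=1..n. \<bar>Er x k n\<bar>) \<le> (\<Sum>k=1..n. (1 - \<rho> k) * PI k n * ?c k)"
    proof (rule sum_mono)
      fix k assume k: "k \<in> {1..n}"
      have "\<bar>Er x k n\<bar> \<le> m k J * PI k n" using Er_bound[OF x] k by auto
      also have "\<dots> \<le> (real J * (1 - \<rho> k) * \<bar>ell J k\<bar>) * PI k n"
        using ell_abs[of J k] J k PI_nn by (intro mult_right_mono) auto
      finally show "\<bar>Er x k n\<bar> \<le> (1 - \<rho> k) * PI k n * ?c k" by (simp add: ac_simps)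
    qed
    then show "\<bar>\<Sum>k=1..n. Er x k n\<bar> \<le> (\<Sum>k=1..n. (1 - \<rho> k) * PI k n * ?c k)"
      using sum_abs[of "\<lambda>k. Er x k n" "{1..n}"] by linarith
  qed
qed

lemma H_minus_1:
  "H k (1 - t x k n) - 1 = (\<Sum>j\<in>{1..<J}. m k j / fact j * (- t x k n) ^ j) + Er x k n"
proof -
  have "(\<Sum>j<J. m k j / fact j * (- t x k n) ^ j) = 1 + (\<Sum>j\<in>{1..<J}. m k j / fact j * (- t x k n) ^ j)"
    using J by (simp add: atLeast0LessThan[symmetric] sum.atLeast_Suc_lessThan One_nat_def)
  then show ?thesis unfolding Er_def by simp
qed

lemma Q_lim:
  assumes x: "x \<in> {0..1}"
  shows "(\<lambda>n. \<Sum>k=1..n. (H k (1 - t x k n) - 1)) \<longlonglongrightarrow> L x"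
proof -
  have eq: "(\<Sum>k=1..n. (H k (1 - t x k n) - 1)) =
      (\<Sum>j\<in>{1..<J}. (-1) ^ j / fact j * (\<Sum>k=1..n. m k j * t x k n ^ j)) + (\<Sum>k=1..n. Er x k n)" for n
  proof -
    have "(\<Sum>k=1..n. (H k (1 - t x k n) - 1)) =
        (\<Sum>k=1..n. \<Sum>j\<in>{1..<J}. m k j / fact j * (- t x k n) ^ j) + (\<Sum>k=1..n. Er x k n)"
      by (simp add: H_minus_1 sum.distrib)
    also have "(\<Sum>k=1..n. \<Sum>j\<in>{1..<J}. m k j / fact j * (- t x k n) ^ j)
        = (\<Sum>j\<in>{1..<J}. \<Sum>k=1..n. m k j / fact j * (- t x k n) ^ j)"
      by (rule sum.swap)
    also have "\<dots> = (\<Sum>j\<in>{1..<J}. (-1) ^ j / fact j * (\<Sum>k=1..n. m k j * t x k n ^ j))"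
    proof (rule sum.cong[OF refl])
      fix j
      have e: "m k j / fact j * (- t x k n) ^ j = (-1) ^ j / fact j * (m k j * t x k n ^ j)" for k
        by (simp add: power_minus[of "t x k n"])
      show "(\<Sum>k=1..n. m k j / fact j * (- t x k n) ^ j) = (-1) ^ j / fact j * (\<Sum>k=1..n. m k j * t x k n ^ j)"
        unfolding e by (simp add: sum_distrib_left)
    qed
    finally show ?thesis .
  qed
  have "(\<lambda>n. (\<Sum>j\<in>{1..<J}. (-1) ^ j / fact j * (\<Sum>k=1..n. m k j * t x k n ^ j)) + (\<Sum>k=1..n. Er x k n))
      \<longlonglongrightarrow> (\<Sum>j\<in>{1..<J}. (-1) ^ j / fact j * (lam j * (1 - x) ^ j)) + 0"
  proof (rule tendsto_add[OF tendsto_sum Er_lim[OF x]])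
    fix j assume "j \<in> {1..<J}"
    then have j: "j \<in> {1..J}" by auto
    show "(\<lambda>n. (-1) ^ j / fact j * (\<Sum>k=1..n. m k j * t x k n ^ j)) \<longlonglongrightarrow> (-1) ^ j / fact j * (lam j * (1 - x) ^ j)"
      by (rule tendsto_mult_left[OF S_lim[OF x j]])
  qed
  then show ?thesis unfolding eq L_def by (simp add: mult.assoc)
qed

lemma prod_lim:
  assumes x: "x \<in> {0..1}"
  shows "(\<lambda>n. \<Prod>k=1..n. H k (1 - t x k n)) \<longlonglongrightarrow> exp (L x)"
proof -
  let ?v = "\<lambda>n k. H k (1 - t x k n)"
  have v01: "?v n k \<in> {0..1}" for n k
    using t_01[OF x, of k n] pgf_01 by auto
  have e: "(\<lambda>n. exp (\<Sum>k=1..n. (?v n k - 1))) \<longlonglongrightarrow> exp (L x)"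
    by (intro tendsto_exp Q_lim[OF x])
  let ?c = "\<lambda>k. (1 - \<rho> k) * (ell 1 k)^2"
  have c: "?c \<longlonglongrightarrow> 0"
  proof -
    have J1: "1 \<in> {1..J}" using J by auto
    have "(\<lambda>k. (1 - \<rho> k) * (ell 1 k)^2) \<longlonglongrightarrow> (1 - 1) * (lam 1)^2"
      by (intro tendsto_mult tendsto_diff tendsto_const rho_lim tendsto_power ell_lim[OF J1])
    then show ?thesis by simp
  qed
  have tm: "\<bar>?v n k - exp (- (1 - ?v n k))\<bar> \<le> (1 - \<rho> k) * PI k n * ?c k" if k: "k \<in> {1..n}" for n k
  proof -
    have "?v n k \<in> {0..1}" by (rule v01)
    then have u: "0 \<le> 1 - ?v n k" "1 - ?v n k \<le> 1" by auto
    have a1: "\<bar>?v n k - exp (- (1 - ?v n k))\<bar> \<le> (1 - ?v n k)^2"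
      using exp_minus_approx[OF u] by simp
    have a2: "1 - ?v n k \<le> m k 1 * t x k n"
      using pgf_lower(1)[of "eps k" "t x k n"] eps_fin k J t_01[OF x, of k n] by auto
    have a3: "m k 1 * t x k n \<le> m k 1 * PI k n" using t_le_PI[OF x] m_nn by (intro mult_left_mono) auto
    have a4: "m k 1 * PI k n \<le> (1 - \<rho> k) * \<bar>ell 1 k\<bar> * PI k n"
      using ell_abs[of 1 k] k PI_nn by (intro mult_right_mono) auto
    have "1 - ?v n k \<le> (1 - \<rho> k) * \<bar>ell 1 k\<bar> * PI k n" using a2 a3 a4 by linarith
    then have a5: "(1 - ?v n k)^2 \<le> ((1 - \<rho> k) * \<bar>ell 1 k\<bar> * PI k n)^2"
      using u by (intro power_mono) auto
    have a6: "((1 - \<rho> k) * \<bar>ell 1 k\<bar> * PI k n)^2 = ((1 - \<rho> k) * PI k n * ?c k) * PI k n"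
      by (simp add: power2_eq_square)
    have nn: "0 \<le> (1 - \<rho> k) * PI k n * ?c k" using rho_le k PI_nn by auto
    have a7: "((1 - \<rho> k) * PI k n * ?c k) * PI k n \<le> ((1 - \<rho> k) * PI k n * ?c k) * 1"
      using PI_le1 nn by (intro mult_left_mono) auto
    show ?thesis using a1 a5 a6 a7 by linarith
  qed
  have d: "(\<lambda>n. (\<Prod>k=1..n. ?v n k) - exp (\<Sum>k=1..n. (?v n k - 1))) \<longlonglongrightarrow> 0"
  proof (rule toep_bound[OF _ c])
    fix n
    have ex: "exp (\<Sum>k=1..n. (?v n k - 1)) = (\<Prod>k=1..n. exp (- (1 - ?v n k)))"
      by (simp add: exp_sum)
    have b1: "\<bar>(\<Prod>k=1..n. ?v n k) - (\<Prod>k=1..n. exp (- (1 - ?v n k)))\<bar>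
        \<le> (\<Sum>k=1..n. \<bar>?v n k - exp (- (1 - ?v n k))\<bar>)"
      using v01 by (intro prod_diff_le) (auto simp: less_imp_le)
    have b2: "(\<Sum>k=1..n. \<bar>?v n k - exp (- (1 - ?v n k))\<bar>) \<le> (\<Sum>k=1..n. (1 - \<rho> k) * PI k n * ?c k)"
      by (rule sum_mono) (rule tm)
    show "\<bar>(\<Prod>k=1..n. ?v n k) - exp (\<Sum>k=1..n. (?v n k - 1))\<bar> \<le> (\<Sum>k=1..n. (1 - \<rho> k) * PI k n * ?c k)"
      unfolding ex using b1 b2 by linarith
  qed
  from tendsto_add[OF d e] show ?thesis by simp
qed

lemma pgf_X_lim:
  assumes x: "x \<in> {0..1}"
  shows "(\<lambda>n. pgf (X_law xi eps n) x) \<longlonglongrightarrow> exp (L x)"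
proof -
  have "pgf (X_law xi eps n) x = (\<Prod>k=1..n. H k (1 - t x k n))" for n
    using pgf_X_prod[OF x] by (simp add: t_def)
  then show ?thesis using prod_lim[OF x] by simp
qed

end

declare One_nat_def [simp del]

lemma deriv_pow_div:
  assumes "p \<ge> 1"
  shows "((\<lambda>s::real. s ^ p / real p) has_real_derivative s ^ (p - 1)) (at s)"
proof -
  have "((\<lambda>s::real. s ^ p / real p) has_real_derivative (real p * s ^ (p - 1)) / real p) (at s)"
  proof -
    have "((\<lambda>s::real. s ^ p) has_real_derivative real p * s ^ (p - 1)) (at s)"
      using DERIV_pow[of p s] by (simp add: One_nat_def)
    from DERIV_cdivide[OF this, of "real p"] show ?thesis .
  qed
  then show ?thesis using assms by simp
qed

lemma alt_sum_lower:
  fixes N M k :: nat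
  assumes k: "k \<ge> 1"
  shows "- real (N choose M) / real (k + M) \<le> (\<Sum>i<M. (-1) ^ i * real (N choose i) / real (k + i))"
proof -
  define \<Phi> where "\<Phi> s = (\<Sum>i<M. (-1) ^ i * real (N choose i) * (s ^ (k + i) / real (k + i)))
                         + real (N choose M) * (s ^ (k + M) / real (k + M))" for s :: real
  have der: "(\<Phi> has_real_derivative
      (\<Sum>i<M. (-1) ^ i * real (N choose i) * s ^ (k + i - 1)) + real (N choose M) * s ^ (k + M - 1)) (at s)" for s
  proof -
    have d1: "((\<lambda>s. (-1) ^ i * real (N choose i) * (s ^ (k + i) / real (k + i))) has_real_derivative
        (-1) ^ i * real (N choose i) * s ^ (k + i - 1)) (at s)" for i
      by (intro DERIV_cmult deriv_pow_div) (use k in simp)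
    have d2: "((\<lambda>s. real (N choose M) * (s ^ (k + M) / real (k + M))) has_real_derivative
        real (N choose M) * s ^ (k + M - 1)) (at s)"
      by (intro DERIV_cmult deriv_pow_div) (use k in simp)
    show ?thesis unfolding \<Phi>_def[abs_def]
      by (intro DERIV_add DERIV_sum d1 d2)
  qed
  have dnn: "0 \<le> (\<Sum>i<M. (-1) ^ i * real (N choose i) * s ^ (k + i - 1)) + real (N choose M) * s ^ (k + M - 1)"
    if s: "0 \<le> s" "s \<le> 1" for s
  proof -
    have e1: "(\<Sum>i<M. (-1) ^ i * real (N choose i) * s ^ (k + i - 1)) + real (N choose M) * s ^ (k + M - 1)
        = s ^ (k - 1) * ((\<Sum>i<M. real (N choose i) * (- s) ^ i) + real (N choose M) * s ^ M)"
    proof -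
      have "s ^ (k + i - 1) = s ^ (k - 1) * s ^ i" for i
        using k by (simp add: power_add[symmetric])
      note pw = this
      have a: "(\<Sum>i<M. (-1) ^ i * real (N choose i) * s ^ (k + i - 1)) = s ^ (k - 1) * (\<Sum>i<M. real (N choose i) * (- s) ^ i)"
        unfolding sum_distrib_left by (rule sum.cong[OF refl]) (simp add: pw power_minus[of s] mult_ac)
      have b: "real (N choose M) * s ^ (k + M - 1) = s ^ (k - 1) * (real (N choose M) * s ^ M)"
        by (simp add: pw mult_ac)
      show ?thesis unfolding a b by (simp add: distrib_left)
    qed
    have "(\<Sum>i<M. real (N choose i) * (- s) ^ i) = (1 - s) ^ N - R M N s" by (simp add: R_def)
    moreover have "R M N s \<le> real (N choose M) * s ^ M"
    proof -
      have "\<bar>R M N s\<bar> = \<bar>(-1) ^ M * R M N s\<bar>" by (simp add: abs_mult)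
      then show ?thesis using R_bound[OF s, of M N] by linarith
    qed
    moreover have "0 \<le> (1 - s) ^ N" using s by simp
    ultimately have "0 \<le> (\<Sum>i<M. real (N choose i) * (- s) ^ i) + real (N choose M) * s ^ M" by linarith
    then show ?thesis unfolding e1 using s by simp
  qed
  have "\<Phi> 0 \<le> \<Phi> 1"
  proof (rule DERIV_nonneg_imp_nondecreasing[of 0 1])
    fix s :: real assume "0 \<le> s" "s \<le> 1"
    then show "\<exists>y. DERIV \<Phi> s :> y \<and> y \<ge> 0" using der[of s] dnn[of s] by blast
  qed simp
  moreover have "\<Phi> 0 = 0" unfolding \<Phi>_def using k by (simp add: power_0_left)
  moreover have "\<Phi> 1 = (\<Sum>i<M. (-1) ^ i * real (N choose i) / real (k + i)) + real (N choose M) / real (k + M)"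
    unfolding \<Phi>_def by simp
  ultimately have "0 \<le> (\<Sum>i<M. (-1) ^ i * real (N choose i) / real (k + i)) + real (N choose M) / real (k + M)"
    by linarith
  then show ?thesis by (simp only: minus_divide_left[symmetric])
qed


lemma cancel_aux: "(d::real) \<noteq> 0 \<Longrightarrow> d * (c * (y / (K * d))) = c * y / K"
  by (cases "K = 0") (simp_all add: field_simps)

lemma choose_ident: "(n choose (k + i)) * ((k + i) choose k) = (n choose k) * ((n - k) choose i)"
proof (cases "k + i \<le> n")
  case True
  then show ?thesis using choose_mult[of k "k + i" n] by simp
next
  case False
  then show ?thesis by (cases "k \<le> n") (auto simp: binomial_eq_0)
qed

lemma pointwise_lower:
  fixes Y k J :: nat
  assumes k: "1 \<le> k" "k < J"
  shows "- real (J choose k) / real J * real (Y choose J)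
     \<le> (\<Sum>i<J-k. (-1) ^ i * real ((k + i) choose k) / real (k + i) * real (Y choose (k + i)))"
proof -
  have "(\<Sum>i<J-k. (-1) ^ i * real ((k + i) choose k) / real (k + i) * real (Y choose (k + i)))
      = real (Y choose k) * (\<Sum>i<J-k. (-1) ^ i * real ((Y - k) choose i) / real (k + i))"
    unfolding sum_distrib_left
  proof (rule sum.cong[OF refl])
    fix i
    have "real (Y choose (k + i)) * real ((k + i) choose k) = real (Y choose k) * real ((Y - k) choose i)"
      using choose_ident[of Y k i] by (metis of_nat_mult)
    then show "(-1) ^ i * real ((k + i) choose k) / real (k + i) * real (Y choose (k + i))
        = real (Y choose k) * ((-1) ^ i * real ((Y - k) choose i) / real (k + i))"
      by (simp add: field_simps)
  qed
  moreover have "real (Y choose k) * (- real ((Y - k) choose (J - k)) / real (k + (J - k)))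
      \<le> real (Y choose k) * (\<Sum>i<J-k. (-1) ^ i * real ((Y - k) choose i) / real (k + i))"
    using alt_sum_lower[OF k(1), of "Y - k" "J - k"] by (intro mult_left_mono) auto
  moreover have "real (Y choose k) * (- real ((Y - k) choose (J - k)) / real (k + (J - k)))
      = - real (J choose k) / real J * real (Y choose J)"
  proof -
    have "real (Y choose J) * real (J choose k) = real (Y choose k) * real ((Y - k) choose (J - k))"
      using choose_ident[of Y k "J - k"] k by (metis le_add_diff_inverse less_imp_le of_nat_mult)
    then show ?thesis using k by (simp add: field_simps)
  qed
  ultimately show ?thesis by linarith
qed

context main
begin

lemma mu_nonneg:
  assumes k: "k \<in> {1..<J}"
    and mu: "\<mu> k = 1 / fact k * (\<Sum>i=0..J-k-1. (-1) ^ i / fact i * lam (k + i))"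
  shows "0 \<le> \<mu> k"
proof -
  have k1: "1 \<le> k" "k < J" using k by auto
  define T where "T n = (\<Sum>i<J-k. (-1) ^ i / (fact k * fact i) * ell (k + i) n)" for n
  have set_eq: "{0..J-k-1} = {..<J-k}" using k1 by auto
  have T_lim: "T \<longlonglongrightarrow> \<mu> k"
  proof -
    have "T \<longlonglongrightarrow> (\<Sum>i<J-k. (-1) ^ i / (fact k * fact i) * lam (k + i))"
      unfolding T_def[abs_def]
    proof (intro tendsto_sum tendsto_mult_left)
      fix i assume "i \<in> {..<J-k}"
      then have "k + i \<in> {1..J}" using k1 by auto
      then show "(\<lambda>n. ell (k + i) n) \<longlonglongrightarrow> lam (k + i)" by (rule ell_lim)
    qed
    also have "(\<Sum>i<J-k. (-1) ^ i / (fact k * fact i) * lam (k + i)) = \<mu> k"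
      unfolding mu set_eq sum_distrib_left by (intro sum.cong refl) simp
    finally show ?thesis .
  qed
  have JJ: "J \<in> {1..J}" using J by auto
  have R_lim: "(\<lambda>n. - real (J choose k) / fact J * ell J n) \<longlonglongrightarrow> 0"
    using ell_lim[OF JJ] lam_J by (intro tendsto_mult_right_zero) auto
  have ineq: "- real (J choose k) / fact J * ell J n \<le> T n" if n: "n \<ge> 1" for n
  proof -
    let ?p = "measure_pmf (eps n)"
    have fin: "integrable ?p (\<lambda>Y. real (Y choose j))" if "j \<in> {1..J}" for j
      using eps_fin n that fmom_finite_choose by auto
    have r: "0 < 1 - \<rho> n" using rho_lt1[OF n] by simp
    have "measure_pmf.expectation (eps n) (\<lambda>Y. - real (J choose k) / real J * real (Y choose J))
        \<le> measure_pmf.expectation (eps n) (\<lambda>Y. \<Sum>i<J-k. (-1) ^ i * real ((k + i) choose k) / real (k + i) * real (Y choose (k + i)))"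
    proof (rule integral_mono)
      show "integrable ?p (\<lambda>Y. - real (J choose k) / real J * real (Y choose J))"
        using fin[OF JJ] by simp
      show "integrable ?p (\<lambda>Y. \<Sum>i<J-k. (-1) ^ i * real ((k + i) choose k) / real (k + i) * real (Y choose (k + i)))"
        using fin k1 by (intro Bochner_Integration.integrable_sum integrable_mult_right) auto
      show "- real (J choose k) / real J * real (Y choose J) \<le> (\<Sum>i<J-k. (-1) ^ i * real ((k + i) choose k) / real (k + i) * real (Y choose (k + i)))" for Y
        by (rule pointwise_lower[OF k1])
    qed
    also have "measure_pmf.expectation (eps n) (\<lambda>Y. \<Sum>i<J-k. (-1) ^ i * real ((k + i) choose k) / real (k + i) * real (Y choose (k + i)))
        = (\<Sum>i<J-k. (-1) ^ i * real ((k + i) choose k) / real (k + i) * (m n (k + i) / fact (k + i)))"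
      using fin k1 by (subst Bochner_Integration.integral_sum) (auto simp: E_choose mult_ac)
    also have "\<dots> = (1 - \<rho> n) * T n"
      unfolding T_def sum_distrib_left
    proof (rule sum.cong[OF refl])
      fix i assume "i \<in> {..<J-k}"
      have b: "real ((k + i) choose k) = fact (k + i) / (fact k * fact i)"
        by (subst binomial_fact) auto
      have ki: "real (k + i) \<noteq> 0" using k1 by auto
      have f: "(fact (k + i) :: real) \<noteq> 0" by simp
      have r0: "1 - \<rho> n \<noteq> 0" using r by simp
      have l: "(-1) ^ i * (fact (k + i) / (fact k * fact i)) / real (k + i) * (m n (k + i) / fact (k + i))
          = (-1) ^ i / (fact k * fact i) * m n (k + i) / real (k + i)"
        using f by (simp add: field_simps)
      have rr: "(1 - \<rho> n) * ((-1) ^ i / (fact k * fact i) * (m n (k + i) / (real (k + i) * (1 - \<rho> n))))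
          = (-1) ^ i / (fact k * fact i) * m n (k + i) / real (k + i)"
        using cancel_aux[OF r0] by simp
      show "(-1) ^ i * real ((k + i) choose k) / real (k + i) * (m n (k + i) / fact (k + i))
          = (1 - \<rho> n) * ((-1) ^ i / (fact k * fact i) * ell (k + i) n)"
        unfolding b ell_def l rr by simp
    qed
    finally have "measure_pmf.expectation (eps n) (\<lambda>Y. - real (J choose k) / real J * real (Y choose J)) \<le> (1 - \<rho> n) * T n" .
    moreover have "measure_pmf.expectation (eps n) (\<lambda>Y. - real (J choose k) / real J * real (Y choose J))
        = (1 - \<rho> n) * (- real (J choose k) / fact J * ell J n)"
    proof -
      have "J > 0" using J by auto
      then show ?thesis using r by (simp add: E_choose ell_def field_simps)
    qed
    ultimately have "(1 - \<rho> n) * (- real (J choose k) / fact J * ell J n) \<le> (1 - \<rho> n) * T n"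
      by simp
    then show ?thesis by (rule mult_left_le_imp_le) (use r in simp)
  qed
  show ?thesis
    by (rule LIMSEQ_le[OF R_lim T_lim]) (use ineq in \<open>auto intro: exI[of _ 1]\<close>)
qed

end

declare One_nat_def [simp del]

lemma binom_inner:
  fixes x :: real
  assumes j: "j \<ge> 1"
  shows "(\<Sum>k\<in>{1..j}. real (j choose k) * (-1) ^ (j - k) * (x ^ k - 1)) = (x - 1) ^ j"
proof -
  have a: "(x - 1) ^ j = (\<Sum>k\<le>j. real (j choose k) * x ^ k * (-1) ^ (j - k))"
    using binomial_ring[of x "-1" j] by simp
  have b: "(0::real) = (\<Sum>k\<le>j. real (j choose k) * 1 ^ k * (-1) ^ (j - k))"
  proof -
    have "(0::real) ^ j = 0" using j by (simp add: power_0_left)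
    then show ?thesis using binomial_ring[of "1::real" "-1" j] j by (simp add: power_0_left)
  qed
  have "(\<Sum>k\<le>j. real (j choose k) * (-1) ^ (j - k) * (x ^ k - 1))
      = (\<Sum>k\<le>j. real (j choose k) * x ^ k * (-1) ^ (j - k)) - (\<Sum>k\<le>j. real (j choose k) * 1 ^ k * (-1) ^ (j - k))"
    by (simp add: sum_subtractf[symmetric] algebra_simps)
  also have "\<dots> = (x - 1) ^ j" using a b by simp
  finally have c: "(\<Sum>k\<le>j. real (j choose k) * (-1) ^ (j - k) * (x ^ k - 1)) = (x - 1) ^ j" .
  have "(\<Sum>k\<le>j. real (j choose k) * (-1) ^ (j - k) * (x ^ k - 1))
      = (\<Sum>k\<in>{1..j}. real (j choose k) * (-1) ^ (j - k) * (x ^ k - 1))"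
  proof -
    have "{..j} = insert 0 {1..j}" by auto
    then show ?thesis by simp
  qed
  then show ?thesis using c by simp
qed

lemma poly_identity:
  fixes lam \<mu> :: "nat \<Rightarrow> real" and x :: real
  assumes mu: "\<forall>j\<in>{1..<J}. \<mu> j = 1 / fact j * (\<Sum>i=0..J-j-1. (-1) ^ i / fact i * lam (j + i))"
  shows "(\<Sum>j\<in>{1..<J}. (-1) ^ j / fact j * lam j * (1 - x) ^ j) = (\<Sum>j=1..J-1. \<mu> j * (x ^ j - 1))"
proof -
  let ?F = "\<lambda>k j. lam j / fact j * (real (j choose k) * (-1) ^ (j - k) * (x ^ k - 1))"
  have A: "\<mu> k * (x ^ k - 1) = (\<Sum>j\<in>{j\<in>{1..<J}. k \<le> j}. ?F k j)" if k: "k \<in> {1..<J}" for k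
  proof -
    have "\<mu> k = 1 / fact k * (\<Sum>i=0..<J-k. (-1) ^ i / fact i * lam (k + i))"
    proof -
      have "{0..J-k-1} = {0..<J-k}" using k by auto
      then show ?thesis using mu k by simp
    qed
    also have "(\<Sum>i=0..<J-k. (-1) ^ i / fact i * lam (k + i)) = (\<Sum>j=k..<J. (-1) ^ (j - k) / fact (j - k) * lam j)"
    proof -
      have "(\<Sum>j=k..<J. (-1) ^ (j - k) / fact (j - k) * lam j) = (\<Sum>j=0+k..<(J-k)+k. (-1) ^ (j - k) / fact (j - k) * lam j)"
        using k by simp
      also have "\<dots> = (\<Sum>i=0..<J-k. (-1) ^ i / fact i * lam (i + k))"
        by (subst sum.shift_bounds_nat_ivl) simp
      finally show ?thesis by (simp add: add.commute)
    qed
    finally have "\<mu> k * (x ^ k - 1) = (\<Sum>j=k..<J. 1 / fact k * ((-1) ^ (j - k) / fact (j - k) * lam j) * (x ^ k - 1))"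
      by (simp add: sum_distrib_left sum_distrib_right)
    also have "\<dots> = (\<Sum>j=k..<J. ?F k j)"
    proof (rule sum.cong[OF refl])
      fix j assume "j \<in> {k..<J}"
      then have kj: "k \<le> j" by auto
      have "real (j choose k) = fact j / (fact k * fact (j - k))" using binomial_fact[OF kj] by simp
      then show "1 / fact k * ((-1) ^ (j - k) / fact (j - k) * lam j) * (x ^ k - 1) = ?F k j"
        by simp
    qed
    also have "{k..<J} = {j\<in>{1..<J}. k \<le> j}" using k by auto
    finally show ?thesis .
  qed
  have "(\<Sum>j=1..J-1. \<mu> j * (x ^ j - 1)) = (\<Sum>k\<in>{1..<J}. \<mu> k * (x ^ k - 1))"
    by (rule sum.cong) auto
  also have "\<dots> = (\<Sum>k\<in>{1..<J}. \<Sum>j\<in>{j\<in>{1..<J}. k \<le> j}. ?F k j)"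
    using A by (rule sum.cong[OF refl])
  also have "\<dots> = (\<Sum>j\<in>{1..<J}. \<Sum>k\<in>{k\<in>{1..<J}. k \<le> j}. ?F k j)"
    by (rule sum.swap_restrict) auto
  also have "\<dots> = (\<Sum>j\<in>{1..<J}. lam j / fact j * (x - 1) ^ j)"
  proof (rule sum.cong[OF refl])
    fix j assume j: "j \<in> {1..<J}"
    have "{k\<in>{1..<J}. k \<le> j} = {1..j}" using j by auto
    show "(\<Sum>k\<in>{k\<in>{1..<J}. k \<le> j}. ?F k j) = lam j / fact j * (x - 1) ^ j"
    proof -
      have "(\<Sum>k\<in>{1..j}. ?F k j) = lam j / fact j * (\<Sum>k\<in>{1..j}. real (j choose k) * (-1) ^ (j - k) * (x ^ k - 1))"
        by (simp add: sum_distrib_left)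
      then show ?thesis using binom_inner[of j x] j \<open>{k\<in>{1..<J}. k \<le> j} = {1..j}\<close> by simp
    qed
  qed
  also have "\<dots> = (\<Sum>j\<in>{1..<J}. (-1) ^ j / fact j * lam j * (1 - x) ^ j)"
  proof (rule sum.cong[OF refl])
    fix j
    have "(x - 1) ^ j = (-1) ^ j * (1 - x) ^ j" by (simp add: power_mult_distrib[symmetric])
    then show "lam j / fact j * (x - 1) ^ j = (-1) ^ j / fact j * lam j * (1 - x) ^ j" by simp
  qed
  finally show ?thesis by simp
qed

declare One_nat_def [simp del]

lemma expectation_suminf:
  fixes p :: "nat pmf" and f :: "nat \<Rightarrow> real"
  assumes bd: "\<And>k. \<bar>f k\<bar> \<le> B"
  shows "(\<lambda>k. pmf p k * f k) sums measure_pmf.expectation p f"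
proof -
  have i: "integrable (measure_pmf p) f" by (rule integrable_bdd_pmf[OF bd])
  have i2: "integrable (count_space UNIV) (\<lambda>k. pmf p k * f k)"
    using i unfolding measure_pmf_eq_density
    by (subst (asm) integrable_density) (auto simp: pmf_nonneg)
  have "measure_pmf.expectation p f = integral\<^sup>L (count_space UNIV) (\<lambda>k. pmf p k * f k)"
    unfolding measure_pmf_eq_density by (subst integral_density) (auto simp: pmf_nonneg)
  then show ?thesis using sums_integral_count_space_nat[OF i2] by simp
qed

lemma pgf_suminf:
  assumes "0 \<le> x" "x \<le> 1"
  shows "(\<Sum>k. pmf p k * x ^ k) = pgf p x"
  unfolding pgf_def
  by (rule sums_unique[symmetric], rule expectation_suminf[where B=1]) (use assms in \<open>auto simp: power_le_one\<close>)

lemma pgf_split: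
  fixes p :: "nat pmf"
  assumes x: "0 \<le> x" "x \<le> 1"
  shows "\<exists>r. 0 \<le> r \<and> r \<le> x ^ Suc k \<and>
     pgf p x = (\<Sum>i<k. pmf p i * x ^ i) + pmf p k * x ^ k + r"
proof -
  let ?f = "\<lambda>i. x ^ i * (if i \<le> k then 1 else 0)"
  let ?g = "\<lambda>i. x ^ i * (if i \<le> k then 0 else 1)"
  have bf: "\<bar>?f i\<bar> \<le> 1" "\<bar>?g i\<bar> \<le> 1" for i using x by (auto simp: power_le_one)
  have "pgf p x = measure_pmf.expectation p (\<lambda>i. ?f i + ?g i)"
    unfolding pgf_def by (intro Bochner_Integration.integral_cong) auto
  also have "\<dots> = measure_pmf.expectation p ?f + measure_pmf.expectation p ?g"
    by (rule Bochner_Integration.integral_add) (rule integrable_bdd_pmf, rule bf)+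
  finally have e: "pgf p x = measure_pmf.expectation p ?f + measure_pmf.expectation p ?g" .
  have f: "measure_pmf.expectation p ?f = (\<Sum>i\<in>{..k}. ?f i * pmf p i)"
    by (rule integral_measure_pmf_real) (auto split: if_splits)
  also have "\<dots> = (\<Sum>i<k. pmf p i * x ^ i) + pmf p k * x ^ k"
    by (simp add: lessThan_Suc_atMost[symmetric] mult.commute)
  finally have f': "measure_pmf.expectation p ?f = (\<Sum>i<k. pmf p i * x ^ i) + pmf p k * x ^ k" .
  have g0: "0 \<le> measure_pmf.expectation p ?g" using x by (intro integral_nonneg_AE) auto
  have "measure_pmf.expectation p ?g \<le> measure_pmf.expectation p (\<lambda>_. x ^ Suc k)"
  proof (rule integral_mono)
    show "integrable (measure_pmf p) ?g" by (rule integrable_bdd_pmf, rule bf)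
    show "integrable (measure_pmf p) (\<lambda>_. x ^ Suc k)" by simp
    show "?g i \<le> x ^ Suc k" for i
    proof (cases "i \<le> k")
      case False
      then have "x ^ i \<le> x ^ Suc k" using x by (intro power_decreasing) auto
      then show ?thesis using False by simp
    qed (use x in simp)
  qed
  then have g1: "measure_pmf.expectation p ?g \<le> x ^ Suc k" by simp
  show ?thesis using e f' g0 g1 by (intro exI[of _ "measure_pmf.expectation p ?g"]) auto
qed

lemma aux_div:
  fixes a B c x :: real
  assumes "0 < c" "a * c \<le> B + x * c"
  shows "a \<le> B / c + x"
proof -
  have "(a - x) * c \<le> B" using assms by (simp add: algebra_simps)
  then have "a - x \<le> B / c" using assms by (simp add: le_divide_eq)
  then show ?thesis by simp
qed

lemma pmf_conv_from_pgf:
  fixes P :: "nat \<Rightarrow> nat pmf" and q :: "nat pmf"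
  assumes conv: "\<And>x. 0 \<le> x \<Longrightarrow> x \<le> 1 \<Longrightarrow> (\<lambda>n. pgf (P n) x) \<longlonglongrightarrow> pgf q x"
  shows "(\<lambda>n. pmf (P n) k) \<longlonglongrightarrow> pmf q k"
proof (induction k rule: less_induct)
  case (less k)
  show ?case
  proof (rule LIMSEQ_I)
    fix e :: real assume e: "0 < e"
    define x where "x = min (e / 2) (1 / 2)"
    have x: "0 < x" "x \<le> 1" "x \<le> e / 2" using e by (auto simp: x_def)
    have xk: "0 < x ^ k" using x by simp
    let ?s = "\<lambda>p. \<Sum>i<k. pmf p i * x ^ i"
    have sl: "(\<lambda>n. ?s (P n)) \<longlonglongrightarrow> ?s q"
      using less by (intro tendsto_sum tendsto_mult_right) auto
    have cl: "(\<lambda>n. (\<bar>pgf (P n) x - pgf q x\<bar> + \<bar>?s (P n) - ?s q\<bar>) / x ^ k) \<longlonglongrightarrow> (0 + 0) / x ^ k"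
      using conv[of x] x sl
      by (intro tendsto_divide tendsto_add tendsto_rabs_zero LIM_zero) auto
    then obtain N where N: "\<And>n. n \<ge> N \<Longrightarrow> \<bar>(\<bar>pgf (P n) x - pgf q x\<bar> + \<bar>?s (P n) - ?s q\<bar>) / x ^ k\<bar> < e / 2"
      using LIMSEQ_D[of _ 0 "e/2"] e by fastforce
    show "\<exists>no. \<forall>n\<ge>no. norm (pmf (P n) k - pmf q k) < e"
    proof (intro exI allI impI)
      fix n assume n: "N \<le> n"
      obtain r1 where r1: "0 \<le> r1" "r1 \<le> x ^ Suc k" "pgf (P n) x = ?s (P n) + pmf (P n) k * x ^ k + r1"
        using pgf_split[where p="P n" and x=x and k=k] x by auto
      obtain r2 where r2: "0 \<le> r2" "r2 \<le> x ^ Suc k" "pgf q x = ?s q + pmf q k * x ^ k + r2"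
        using pgf_split[where p=q and x=x and k=k] x by auto
      have "(pmf (P n) k - pmf q k) * x ^ k = (pgf (P n) x - pgf q x) - (?s (P n) - ?s q) - (r1 - r2)"
        using r1 r2 by (simp add: algebra_simps)
      then have "\<bar>pmf (P n) k - pmf q k\<bar> * x ^ k \<le> \<bar>pgf (P n) x - pgf q x\<bar> + \<bar>?s (P n) - ?s q\<bar> + x ^ Suc k"
        using r1 r2 xk by (simp add: abs_mult)
      have "\<bar>pmf (P n) k - pmf q k\<bar> \<le> (\<bar>pgf (P n) x - pgf q x\<bar> + \<bar>?s (P n) - ?s q\<bar>) / x ^ k + x"
        by (rule aux_div[OF xk]) (use \<open>\<bar>pmf (P n) k - pmf q k\<bar> * x ^ k \<le> _\<close> in \<open>simp add: algebra_simps\<close>)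
      also have "\<dots> < e / 2 + e / 2"
        using N[OF n] x by (intro add_less_le_mono) auto
      finally show "norm (pmf (P n) k - pmf q k) < e" by simp
    qed
  qed
qed

lemma weak_conv_from_pmf:
  fixes P :: "nat \<Rightarrow> nat pmf" and q :: "nat pmf"
  assumes "\<And>k. (\<lambda>n. pmf (P n) k) \<longlonglongrightarrow> pmf q k"
  shows "weak_conv_m (\<lambda>n. measure_pmf (map_pmf real (P n))) (measure_pmf (map_pmf real q))"
  unfolding weak_conv_m_def weak_conv_def
proof (intro allI impI)
  fix y :: real
  let ?A = "{i::nat. real i \<le> y}"
  have fin: "finite ?A"
  proof (rule finite_subset[of _ "{..nat \<lceil>y\<rceil>}"])
    show "?A \<subseteq> {..nat \<lceil>y\<rceil>}"
    proof
      fix i assume "i \<in> ?A"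
      then have "real i \<le> y" by simp
      then have "int i \<le> \<lceil>y\<rceil>" by (simp add: le_ceiling_iff)
      then show "i \<in> {..nat \<lceil>y\<rceil>}" by simp
    qed
  qed simp
  have c: "cdf (measure_pmf (map_pmf real p)) y = (\<Sum>i\<in>?A. pmf p i)" for p :: "nat pmf"
    unfolding cdf_def2 measure_map_pmf using fin
    by (subst measure_measure_pmf_finite[symmetric]) (auto intro: arg_cong[where f="measure _"])
  show "(\<lambda>n. cdf (measure_pmf (map_pmf real (P n))) y) \<longlonglongrightarrow> cdf (measure_pmf (map_pmf real q)) y"
    unfolding c using assms by (intro tendsto_sum) auto
qed

declare One_nat_def [simp del]

definition comp_pmf :: "(nat \<Rightarrow> real) \<Rightarrow> nat \<Rightarrow> nat pmf" where
  "comp_pmf \<mu> j = (if 0 < \<mu> j then map_pmf (\<lambda>n. j * n) (poisson_pmf (\<mu> j)) else return_pmf 0)"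

primrec cpl :: "(nat \<Rightarrow> real) \<Rightarrow> nat \<Rightarrow> nat pmf" where
  "cpl \<mu> 0 = return_pmf 0"
| "cpl \<mu> (Suc N) = bind_pmf (cpl \<mu> N) (\<lambda>s. map_pmf (\<lambda>e. s + e) (comp_pmf \<mu> (Suc N)))"

lemma pgf_poisson:
  assumes r: "0 < r" and y: "0 \<le> y" "y \<le> 1"
  shows "pgf (poisson_pmf r) y = exp (r * (y - 1))"
proof -
  have "(\<lambda>n. (r * y) ^ n /\<^sub>R fact n) sums exp (r * y)" by (rule exp_converges)
  then have "(\<lambda>n. exp (- r) * ((r * y) ^ n / fact n)) sums (exp (- r) * exp (r * y))"
    by (intro sums_mult) (simp add: divide_inverse_commute)
  moreover have "(\<lambda>k. pmf (poisson_pmf r) k * y ^ k) = (\<lambda>n. exp (- r) * ((r * y) ^ n / fact n))"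
    using r by (simp add: power_mult_distrib fun_eq_iff)
  ultimately have "(\<Sum>k. pmf (poisson_pmf r) k * y ^ k) = exp (- r) * exp (r * y)"
    by (simp add: sums_unique[symmetric])
  moreover have "exp (- r) * exp (r * y) = exp (r * (y - 1))"
    unfolding mult_exp_exp by (simp add: algebra_simps)
  ultimately show ?thesis using pgf_suminf[OF y, of "poisson_pmf r"] by simp
qed

lemma pgf_comp:
  assumes mu: "0 \<le> \<mu> j" and x: "0 \<le> x" "x \<le> 1"
  shows "pgf (comp_pmf \<mu> j) x = exp (\<mu> j * (x ^ j - 1))"
proof (cases "0 < \<mu> j")
  case True
  have "pgf (comp_pmf \<mu> j) x = pgf (poisson_pmf (\<mu> j)) (x ^ j)"
    using True unfolding comp_pmf_def pgf_def by (simp add: power_mult)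
  also have "\<dots> = exp (\<mu> j * (x ^ j - 1))"
    using True x by (intro pgf_poisson) (auto simp: power_le_one)
  finally show ?thesis .
next
  case False
  then have "\<mu> j = 0" using mu by simp
  then show ?thesis unfolding comp_pmf_def by simp
qed

lemma pgf_cpl:
  assumes mu: "\<forall>j\<in>{1..N}. 0 \<le> \<mu> j" and x: "0 \<le> x" "x \<le> 1"
  shows "pgf (cpl \<mu> N) x = exp (\<Sum>j=1..N. \<mu> j * (x ^ j - 1))"
  using mu
proof (induction N)
  case 0 then show ?case by simp
next
  case (Suc N)
  have "pgf (cpl \<mu> (Suc N)) x = measure_pmf.expectation (cpl \<mu> N) (\<lambda>s. x ^ s * pgf (comp_pmf \<mu> (Suc N)) x)"
    using x by (simp add: pgf_bind pgf_map_add)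
  also have "\<dots> = pgf (cpl \<mu> N) x * pgf (comp_pmf \<mu> (Suc N)) x"
    unfolding pgf_def by simp
  also have "\<dots> = exp (\<Sum>j=1..N. \<mu> j * (x ^ j - 1)) * exp (\<mu> (Suc N) * (x ^ Suc N - 1))"
    using Suc x by (simp add: pgf_comp)
  also have "\<dots> = exp (\<Sum>j=1..Suc N. \<mu> j * (x ^ j - 1))"
    by (simp add: exp_add[symmetric])
  finally show ?case .
qed

theorem theorem3:
  fixes xi eps :: "nat \<Rightarrow> nat pmf" and J :: nat and lam \<mu> :: "nat \<Rightarrow> real"
  assumes J: "J \<ge> 2"
    and xi_fin: "\<forall>n\<ge>1. fmom_finite (xi n) 1 \<and> fmom_finite (xi n) 2"
    and eps_fin: "\<forall>n\<ge>1. \<forall>k\<in>{1..J}. fmom_finite (eps n) k"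
    and rho_lt: "\<forall>n\<ge>1. fmom (xi n) 1 < 1"
    and rho_lim: "(\<lambda>n. fmom (xi n) 1) \<longlonglongrightarrow> 1"
    and rho_div: "filterlim (\<lambda>N. \<Sum>n=1..N. 1 - fmom (xi n) 1) at_top sequentially"
    and G2_lim: "(\<lambda>n. fmom (xi n) 2 / (1 - fmom (xi n) 1)) \<longlonglongrightarrow> 0"
    and lam_lim: "\<forall>j\<in>{1..J}. (\<lambda>n. fmom (eps n) j / (real j * (1 - fmom (xi n) 1)))
                      \<longlonglongrightarrow> lam j"
    and lam_J: "lam J = 0"
    and mu_def: "\<forall>j\<in>{1..<J}. \<mu> j =
        1 / fact j * (\<Sum>i=0..J-j-1. (-1) ^ i / fact i * lam (j + i))"
  shows "(\<forall>j\<in>{1..<J}. \<mu> j \<ge> 0) \<and>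
         (\<exists>q. is_CP q \<mu> (J - 1) \<and>
              weak_conv_m (\<lambda>n. measure_pmf (map_pmf real (X_law xi eps n)))
                          (measure_pmf (map_pmf real q)))"
proof -
  interpret main xi eps J lam
    using assms by unfold_locales auto
  have nn: "\<forall>j\<in>{1..<J}. 0 \<le> \<mu> j"
    using mu_nonneg mu_def by blast
  have nn': "\<forall>j\<in>{1..J-1}. 0 \<le> \<mu> j" using nn J by auto
  define q where "q = cpl \<mu> (J - 1)"
  have pq: "pgf q x = exp (\<Sum>j=1..J-1. \<mu> j * (x ^ j - 1))" if "0 \<le> x" "x \<le> 1" for x
    unfolding q_def using pgf_cpl[OF nn' that] .
  have cp: "is_CP q \<mu> (J - 1)"
    unfolding is_CP_def using pq pgf_suminf by auto
  have conv: "(\<lambda>n. pgf (X_law xi eps n) x) \<longlonglongrightarrow> pgf q x" if "0 \<le> x" "x \<le> 1" for x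
  proof -
    have "(\<lambda>n. pgf (X_law xi eps n) x) \<longlonglongrightarrow> exp (L x)" using pgf_X_lim that by auto
    also have "L x = (\<Sum>j=1..J-1. \<mu> j * (x ^ j - 1))"
      unfolding L_def by (rule poly_identity[OF mu_def])
    finally show ?thesis using pq[OF that] by simp
  qed
  have "weak_conv_m (\<lambda>n. measure_pmf (map_pmf real (X_law xi eps n))) (measure_pmf (map_pmf real q))"
    by (rule weak_conv_from_pmf, rule pmf_conv_from_pgf, rule conv)
  then show ?thesis using nn cp by auto
qed

end
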